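(* Fix an arm index $k\in[k^*]$ and $\sigma_k>0$. Let $\mathbb{P}_k(\sigma_k)$ be the class of distributions on $\mathbb{R}$ with variance $\sigma_k^2$ (and arbitrary finite mean). Let $\mathbb{V}$ and $\mathbb{T}$ be the classes of nonadaptive sampling algorithms and nonadaptive stopping rules, respectively, for which $N_k(T)\ge1$ almost surely. For $P_k\in\mathbb{P}_k(\sigma_k)$ with mean $\mu_k$, $\nu\in\mathbb{V}$ and $T\in\mathbb{T}$, let $Q=Q(P_k,\nu,T)$ denote the induced distribution of the observations when arm $k$ has distribution $P_k$, the sampling algorithm is $\nu$ and the stopping rule is $T$. Then $$\inf_{\hat\mu_k}\ \sup_{P_k\in\mathbb{P}_k(\sigma_k),\,\nu\in\mathbb{V},\,T\in\mathbb{T}}\ \mathbb{E}_Q\big[N_k(T)(\hat\mu_k(T)-\mu_k)^2\big]=\sigma_k^2,$$ where the infimum is over all estimators (measurable functions of the collected data). Moreover, for any $P_k\in\mathbb{P}_k(\sigma_k)$, $\nu\in\mathbb{V}$ and $T\in\mathbb{T}$, the sample mean satisfies $\mathbb{E}_Q[N_k(T)(\hat\mu_k(T)-\mu_k)^2]=\sigma_k^2$, so it achieves the minimax risk.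
   Context: Multi-armed bandit model: arms $P_1,\dots,P_{k^*}$ on $\mathbb{R}$ with finite means $\mu_k$. With $W$ an independent external random variable, at each time $t$, given $\mathcal{D}_{t-1}=\{W,A_1,Y_1,\dots,A_{t-1},Y_{t-1}\}$, an arm $A_t\in[k^*]$ is drawn with conditional probabilities $\nu_t(\cdot\mid\mathcal{D}_{t-1})$ and $Y_t$ is an independent draw from $P_{A_t}$; data collection stops at a time $T$. $N_k(t)=\sum_{s\le t}\mathbf{1}(A_s=k)$, $S_k(t)=\sum_{s\le t}\mathbf{1}(A_s=k)Y_s$, $\hat\mu_k(t)=S_k(t)/N_k(t)$. A sampling algorithm $\nu=\{\nu_t\}$ is nonadaptive if for each $t$, $\nu_t$ is independent of the observed arm values $Y_1,\dots,Y_{t-1}$ (it may depend on $A_1,\dots,A_{t-1}$ and $W$); a stopping rule $T$ is nonadaptive if it is independent of the arm values (e.g. deterministic, or $T=1+Z$ with $Z$ independent of everything else). *)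

theory Defs
  imports "HOL-Probability.Probability"
begin

text \<open>Canonical data space: an outcome is (W, A, Y) where W is the external
random variable, A i is the arm pulled at time i+1 and Y i the value observed
at time i+1 (0-based indices). Arms are 1..K.\<close>

type_synonym traj = "real \<times> (nat \<Rightarrow> nat) \<times> (nat \<Rightarrow> real)"

definition trajM :: "traj measure" where
  "trajM = borel \<Otimes>\<^sub>M ((\<Pi>\<^sub>M i\<in>UNIV. count_space UNIV) \<Otimes>\<^sub>M (\<Pi>\<^sub>M i\<in>UNIV. (borel :: real measure)))"

definition Wof :: "traj \<Rightarrow> real" where "Wof \<omega> = fst \<omega>"
definition Aof :: "traj \<Rightarrow> nat \<Rightarrow> nat" where "Aof \<omega> = fst (snd \<omega>)"
definition Yof :: "traj \<Rightarrow> nat \<Rightarrow> real" where "Yof \<omega> = snd (snd \<omega>)"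

text \<open>Two outcomes carry the same data D_t = (W, A_1, Y_1, ..., A_t, Y_t).\<close>
definition prefix_eq :: "nat \<Rightarrow> traj \<Rightarrow> traj \<Rightarrow> bool" where
  "prefix_eq t \<omega> \<omega>' \<longleftrightarrow> Wof \<omega> = Wof \<omega>' \<and>
     (\<forall>i<t. Aof \<omega> i = Aof \<omega>' i \<and> Yof \<omega> i = Yof \<omega>' i)"

definition data_event :: "nat \<Rightarrow> traj set \<Rightarrow> bool" where
  "data_event t B \<longleftrightarrow> B \<in> sets trajM \<and>
     (\<forall>\<omega> \<omega>'. prefix_eq t \<omega> \<omega>' \<longrightarrow> (\<omega> \<in> B \<longleftrightarrow> \<omega>' \<in> B))"

definition Ncount :: "nat \<Rightarrow> nat \<Rightarrow> traj \<Rightarrow> nat" where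
  "Ncount k t \<omega> = card {i. i < t \<and> Aof \<omega> i = k}"

definition Ssum :: "nat \<Rightarrow> nat \<Rightarrow> traj \<Rightarrow> real" where
  "Ssum k t \<omega> = (\<Sum>i<t. if Aof \<omega> i = k then Yof \<omega> i else 0)"

definition sample_mean :: "nat \<Rightarrow> nat \<Rightarrow> traj \<Rightarrow> real" where
  "sample_mean k t \<omega> = Ssum k t \<omega> / real (Ncount k t \<omega>)"

definition arm_dist :: "real measure \<Rightarrow> bool" where
  "arm_dist P \<longleftrightarrow> prob_space P \<and> sets P = sets borel \<and> integrable P (\<lambda>x. x)"

definition mean :: "real measure \<Rightarrow> real" where
  "mean P = (\<integral>x. x \<partial>P)"

definition var_class :: "real \<Rightarrow> real measure \<Rightarrow> bool" where
  "var_class \<sigma> P \<longleftrightarrow> arm_dist P \<and> integrable P (\<lambda>x. x\<^sup>2) \<and>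
     (\<integral>x. (x - mean P)\<^sup>2 \<partial>P) = \<sigma>\<^sup>2"

text \<open>Nonadaptive sampling algorithm: nu t w a j is the conditional probability
of pulling arm j at time t+1 given W = w and past arms a 0, ..., a (t-1);
it does not depend on the observed arm values.\<close>
definition nonadaptive_alg :: "nat \<Rightarrow> (nat \<Rightarrow> real \<Rightarrow> (nat \<Rightarrow> nat) \<Rightarrow> nat \<Rightarrow> real) \<Rightarrow> bool" where
  "nonadaptive_alg K nu \<longleftrightarrow>
     (\<forall>t w a j. 0 \<le> nu t w a j) \<and>
     (\<forall>t w a j. j \<notin> {1..K} \<longrightarrow> nu t w a j = 0) \<and>
     (\<forall>t w a. (\<Sum>j\<in>{1..K}. nu t w a j) = 1) \<and>
     (\<forall>t w a a'. (\<forall>i<t. a i = a' i) \<longrightarrow> nu t w a = nu t w a') \<and>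
     (\<forall>t j. (\<lambda>\<omega>. nu t (Wof \<omega>) (Aof \<omega>) j) \<in> borel_measurable trajM)"

text \<open>Q is the distribution of (W, A, Y) induced by the arm distributions P and
the sampling algorithm nu (for some distribution of W): A_{t+1} is drawn from
nu given D_t, and Y_{t+1} is an independent draw from P_{A_{t+1}}.\<close>
definition bandit_law :: "nat \<Rightarrow> (nat \<Rightarrow> real measure) \<Rightarrow>
    (nat \<Rightarrow> real \<Rightarrow> (nat \<Rightarrow> nat) \<Rightarrow> nat \<Rightarrow> real) \<Rightarrow> traj measure \<Rightarrow> bool" where
  "bandit_law K P nu Q \<longleftrightarrow> prob_space Q \<and> sets Q = sets trajM \<and>
     (\<forall>t B j. data_event t B \<longrightarrow>
        emeasure Q (B \<inter> {\<omega>. Aof \<omega> t = j}) =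
          (\<integral>\<^sup>+\<omega>\<in>B. ennreal (nu t (Wof \<omega>) (Aof \<omega>) j) \<partial>Q)) \<and>
     (\<forall>t B j C. data_event t B \<longrightarrow> j \<in> {1..K} \<longrightarrow> C \<in> sets borel \<longrightarrow>
        emeasure Q (B \<inter> {\<omega>. Aof \<omega> t = j} \<inter> {\<omega>. Yof \<omega> t \<in> C}) =
          emeasure Q (B \<inter> {\<omega>. Aof \<omega> t = j}) * emeasure (P j) C)"

text \<open>Nonadaptive stopping rule: T \<omega> is the number of observations collected;
it is a stopping time for the data filtration and depends only on W and the arms.\<close>
definition nonadaptive_stop :: "(traj \<Rightarrow> nat) \<Rightarrow> bool" where
  "nonadaptive_stop T \<longleftrightarrow> T \<in> measurable trajM (count_space UNIV) \<and>
     (\<forall>t \<omega> \<omega>'. prefix_eq t \<omega> \<omega>' \<longrightarrow> (T \<omega> = t \<longleftrightarrow> T \<omega>' = t)) \<and>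
     (\<forall>\<omega> \<omega>'. Wof \<omega> = Wof \<omega>' \<and> Aof \<omega> = Aof \<omega>' \<longrightarrow> T \<omega> = T \<omega>')"

definition is_estimator :: "(nat \<Rightarrow> traj \<Rightarrow> real) \<Rightarrow> bool" where
  "is_estimator est \<longleftrightarrow> (\<forall>t. est t \<in> borel_measurable trajM) \<and>
     (\<forall>t \<omega> \<omega>'. prefix_eq t \<omega> \<omega>' \<longrightarrow> est t \<omega> = est t \<omega>')"

definition risk :: "nat \<Rightarrow> real \<Rightarrow> (nat \<Rightarrow> traj \<Rightarrow> real) \<Rightarrow> traj measure \<Rightarrow> (traj \<Rightarrow> nat) \<Rightarrow> ennreal" where
  "risk k \<mu> est Q T =
     (\<integral>\<^sup>+\<omega>. ennreal (real (Ncount k (T \<omega>) \<omega>) * (est (T \<omega>) \<omega> - \<mu>)\<^sup>2) \<partial>Q)"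

definition admissible :: "nat \<Rightarrow> nat \<Rightarrow> real \<Rightarrow> (nat \<Rightarrow> real measure) \<Rightarrow>
    (real measure \<times> (nat \<Rightarrow> real \<Rightarrow> (nat \<Rightarrow> nat) \<Rightarrow> nat \<Rightarrow> real) \<times> traj measure \<times> (traj \<Rightarrow> nat)) set" where
  "admissible K k \<sigma> P = {(Pk, nu, Q, T). var_class \<sigma> Pk \<and> nonadaptive_alg K nu \<and>
      bandit_law K (P(k := Pk)) nu Q \<and> nonadaptive_stop T \<and>
      (AE \<omega> in Q. 1 \<le> Ncount k (T \<omega>) \<omega>)}"

end

theory Submission
  imports Defs
begin

lemma meas_W[measurable]: "Wof \<in> borel_measurable trajM"
  unfolding trajM_def Wof_def by measurable

lemma meas_A[measurable]: "(\<lambda>\<omega>. Aof \<omega> t) \<in> measurable trajM (count_space UNIV)"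
  unfolding trajM_def Aof_def by measurable

lemma meas_Y[measurable]: "(\<lambda>\<omega>. Yof \<omega> t) \<in> borel_measurable trajM"
  unfolding trajM_def Yof_def by measurable

lemma space_trajM[simp]: "space trajM = UNIV"
  unfolding trajM_def by (simp add: space_pair_measure space_PiM)

definition Fdata :: "nat \<Rightarrow> traj measure" where
  "Fdata t = sigma UNIV {B. data_event t B}"

lemma sigma_algebra_data: "sigma_algebra UNIV {B. data_event t B}"
  unfolding sigma_algebra_iff2
proof (intro conjI ballI allI impI)
  show "{B. data_event t B} \<subseteq> Pow UNIV" by auto
  show "{} \<in> {B. data_event t B}" by (simp add: data_event_def)
next
  fix s assume "s \<in> {B. data_event t B}"
  then show "UNIV - s \<in> {B. data_event t B}"
    unfolding data_event_def using sets.compl_sets[of s trajM] by auto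
next
  fix A :: "nat \<Rightarrow> traj set" assume "range A \<subseteq> {B. data_event t B}"
  then have "\<And>i. data_event t (A i)" by auto
  then show "(\<Union>i. A i) \<in> {B. data_event t B}"
    unfolding data_event_def by auto
qed

lemma sets_Fdata: "sets (Fdata t) = {B. data_event t B}"
  unfolding Fdata_def using sigma_algebra.sets_measure_of_eq[OF sigma_algebra_data] by simp

lemma space_Fdata[simp]: "space (Fdata t) = UNIV"
  unfolding Fdata_def by simp

lemma Fdata_to_trajM: "f \<in> measurable (Fdata t) N \<Longrightarrow> f \<in> measurable trajM N"
  unfolding measurable_def sets_Fdata data_event_def by auto

lemma trajM_to_Fdata:
  assumes "f \<in> measurable trajM N" "\<And>\<omega> \<omega>'. prefix_eq t \<omega> \<omega>' \<Longrightarrow> f \<omega> = f \<omega>'"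
  shows "f \<in> measurable (Fdata t) N"
  using assms unfolding measurable_def sets_Fdata data_event_def by auto

lemma data_induct[consumes 2, case_names set mult add seq]:
  fixes u :: "traj \<Rightarrow> ennreal"
  assumes u: "u \<in> borel_measurable trajM" "\<And>\<omega> \<omega>'. prefix_eq t \<omega> \<omega>' \<Longrightarrow> u \<omega> = u \<omega>'"
  and setc: "\<And>B. data_event t B \<Longrightarrow> P (indicator B)"
  and multc: "\<And>u c. u \<in> borel_measurable trajM \<Longrightarrow> P u \<Longrightarrow> P (\<lambda>x. c * u x)"
  and addc: "\<And>u v. u \<in> borel_measurable trajM \<Longrightarrow> v \<in> borel_measurable trajM \<Longrightarrow> P u \<Longrightarrow> P v \<Longrightarrow> P (\<lambda>x. v x + u x)"
  and seqc: "\<And>U. (\<And>i. U i \<in> borel_measurable trajM) \<Longrightarrow> incseq U \<Longrightarrow> (\<And>i. P (U i)) \<Longrightarrow> P (SUP i. U i)"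
  shows "P u"
proof -
  have "u \<in> borel_measurable (Fdata t)" by (rule trajM_to_Fdata[OF u])
  then show ?thesis
  proof (induction rule: borel_measurable_induct)
    case (cong f g) then show ?case by (metis UNIV_I space_Fdata ext)
  next
    case (set A) then show ?case using setc by (simp add: sets_Fdata)
  next
    case (mult u c) then show ?case using multc Fdata_to_trajM by blast
  next
    case (add u v) then show ?case using addc Fdata_to_trajM by blast
  next
    case (seq U) then show ?case using seqc Fdata_to_trajM by blast
  qed
qed

definition Zc :: "nat \<Rightarrow> real \<Rightarrow> nat \<Rightarrow> traj \<Rightarrow> real" where
  "Zc k \<mu> i \<omega> = (if Aof \<omega> i = k then Yof \<omega> i - \<mu> else 0)"

definition Sc :: "nat \<Rightarrow> real \<Rightarrow> nat \<Rightarrow> traj \<Rightarrow> real" where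
  "Sc k \<mu> t \<omega> = (\<Sum>i<t. Zc k \<mu> i \<omega>)"

definition setA :: "nat \<Rightarrow> nat \<Rightarrow> traj \<Rightarrow> traj" where
  "setA t j \<omega> = (Wof \<omega>, (Aof \<omega>)(t := j), Yof \<omega>)"

lemma Ncount_Suc: "Ncount k (Suc t) \<omega> = Ncount k t \<omega> + (if Aof \<omega> t = k then 1 else 0)"
proof -
  have "{i. i < Suc t \<and> Aof \<omega> i = k} = {i. i < t \<and> Aof \<omega> i = k} \<union> (if Aof \<omega> t = k then {t} else {})"
    by (auto simp: less_Suc_eq)
  then show ?thesis unfolding Ncount_def by (simp add: card_insert_if)
qed

lemma Ncount_0[simp]: "Ncount k 0 \<omega> = 0"
  by (simp add: Ncount_def)

lemma Ncount_le: "Ncount k t \<omega> \<le> t"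
  by (induction t) (auto simp: Ncount_Suc)

lemma Ncount_real: "real (Ncount k t \<omega>) = (\<Sum>i<t. if Aof \<omega> i = k then 1 else 0)"
  by (induction t) (auto simp: Ncount_Suc)

lemma Sc_Suc: "Sc k \<mu> (Suc t) \<omega> = Sc k \<mu> t \<omega> + Zc k \<mu> t \<omega>"
  by (simp add: Sc_def)

lemma Sc_eq: "Sc k \<mu> t \<omega> = Ssum k t \<omega> - real (Ncount k t \<omega>) * \<mu>"
  by (induction t) (auto simp: Sc_Suc Ssum_def Ncount_Suc Zc_def Sc_def algebra_simps)

lemma meas_Ncount[measurable]: "(\<lambda>\<omega>. real (Ncount k t \<omega>)) \<in> borel_measurable trajM"
  unfolding Ncount_real by measurable

lemma meas_Zc[measurable]: "Zc k \<mu> i \<in> borel_measurable trajM"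
  unfolding Zc_def[abs_def] by measurable

lemma meas_Sc[measurable]: "Sc k \<mu> t \<in> borel_measurable trajM"
  unfolding Sc_def[abs_def] by measurable

lemma meas_Ssum[measurable]: "Ssum k t \<in> borel_measurable trajM"
  unfolding Ssum_def[abs_def] by measurable

lemma meas_setA[measurable]: "setA t j \<in> measurable trajM trajM"
  unfolding setA_def trajM_def Wof_def Aof_def Yof_def
  by (intro measurable_Pair measurable_PiM_single') (auto simp: space_PiM)

lemma Aof_setA[simp]: "Aof (setA t j \<omega>) = (Aof \<omega>)(t := j)" and Wof_setA[simp]: "Wof (setA t j \<omega>) = Wof \<omega>"
  and Yof_setA[simp]: "Yof (setA t j \<omega>) = Yof \<omega>"
  by (simp_all add: setA_def Aof_def Wof_def Yof_def)

lemma setA_self: "setA t (Aof \<omega> t) \<omega> = \<omega>"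
  by (cases \<omega>) (simp add: setA_def Aof_def Wof_def Yof_def)

lemma Ncount_prefix: "(\<forall>i<t. Aof \<omega> i = Aof \<omega>' i) \<Longrightarrow> Ncount k t \<omega> = Ncount k t \<omega>'"
  unfolding Ncount_def by (intro arg_cong[where f=card]) auto

lemma Sc_prefix: "prefix_eq t \<omega> \<omega>' \<Longrightarrow> Sc k \<mu> t \<omega> = Sc k \<mu> t \<omega>'"
  unfolding Sc_def Zc_def prefix_eq_def by (intro sum.cong) auto

lemma Ssum_prefix: "prefix_eq t \<omega> \<omega>' \<Longrightarrow> Ssum k t \<omega> = Ssum k t \<omega>'"
  unfolding Ssum_def prefix_eq_def by (intro sum.cong) auto

locale bandit =
  fixes K :: nat and P :: "nat \<Rightarrow> real measure" and nu and Q :: "traj measure"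
  assumes law: "bandit_law K P nu Q" and alg: "nonadaptive_alg K nu"
begin

lemma sets_Q[measurable_cong]: "sets Q = sets trajM"
  using law by (simp add: bandit_law_def)

lemma space_Q[simp]: "space Q = UNIV"
  using sets_eq_imp_space_eq[OF sets_Q] by simp

lemma prob: "prob_space Q"
  using law by (simp add: bandit_law_def)

sublocale Q: prob_space Q by (rule prob)

lemma nu_meas[measurable]: "(\<lambda>\<omega>. nu t (Wof \<omega>) (Aof \<omega>) j) \<in> borel_measurable trajM"
  using alg by (simp add: nonadaptive_alg_def)

lemma nu_nonneg: "0 \<le> nu t w a j"
  using alg by (simp add: nonadaptive_alg_def)

lemma law1: "data_event t B \<Longrightarrow> emeasure Q (B \<inter> {\<omega>. Aof \<omega> t = j}) =
          (\<integral>\<^sup>+\<omega>\<in>B. ennreal (nu t (Wof \<omega>) (Aof \<omega>) j) \<partial>Q)"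
  using law by (simp add: bandit_law_def)

lemma law2: "data_event t B \<Longrightarrow> j \<in> {1..K} \<Longrightarrow> C \<in> sets borel \<Longrightarrow>
        emeasure Q (B \<inter> {\<omega>. Aof \<omega> t = j} \<inter> {\<omega>. Yof \<omega> t \<in> C}) =
          emeasure Q (B \<inter> {\<omega>. Aof \<omega> t = j}) * emeasure (P j) C"
  using law by (simp add: bandit_law_def)

lemma L1:
  assumes "u \<in> borel_measurable trajM" "\<And>\<omega> \<omega>'. prefix_eq t \<omega> \<omega>' \<Longrightarrow> u \<omega> = u \<omega>'"
  shows "(\<integral>\<^sup>+\<omega>. u \<omega> * indicator {\<omega>. Aof \<omega> t = j} \<omega> \<partial>Q) =
         (\<integral>\<^sup>+\<omega>. u \<omega> * ennreal (nu t (Wof \<omega>) (Aof \<omega>) j) \<partial>Q)"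
proof (rule data_induct[OF assms])
  fix B assume set: "data_event t B"
  then have [measurable]: "B \<in> sets trajM" by (simp add: data_event_def)
  have "(\<integral>\<^sup>+\<omega>. indicator B \<omega> * indicator {\<omega>. Aof \<omega> t = j} \<omega> \<partial>Q) = emeasure Q (B \<inter> {\<omega>. Aof \<omega> t = j})"
  proof -
    have "(\<integral>\<^sup>+\<omega>. indicator B \<omega> * indicator {\<omega>. Aof \<omega> t = j} \<omega> \<partial>Q) = (\<integral>\<^sup>+\<omega>. indicator (B \<inter> {\<omega>. Aof \<omega> t = j}) \<omega> \<partial>Q)"
      by (intro nn_integral_cong) (simp split: split_indicator)
    also have "\<dots> = emeasure Q (B \<inter> {\<omega>. Aof \<omega> t = j})"
      by (rule nn_integral_indicator) measurable
    finally show ?thesis .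
  qed
  also have "\<dots> = (\<integral>\<^sup>+\<omega>. indicator B \<omega> * ennreal (nu t (Wof \<omega>) (Aof \<omega>) j) \<partial>Q)"
    using law1[OF set] by (simp add: mult.commute)
  finally show "(\<integral>\<^sup>+\<omega>. indicator B \<omega> * indicator {\<omega>. Aof \<omega> t = j} \<omega> \<partial>Q) = (\<integral>\<^sup>+\<omega>. indicator B \<omega> * ennreal (nu t (Wof \<omega>) (Aof \<omega>) j) \<partial>Q)" .
next
  fix u :: "traj \<Rightarrow> ennreal" and c assume "u \<in> borel_measurable trajM" and
    "(\<integral>\<^sup>+\<omega>. u \<omega> * indicator {\<omega>. Aof \<omega> t = j} \<omega> \<partial>Q) = (\<integral>\<^sup>+\<omega>. u \<omega> * ennreal (nu t (Wof \<omega>) (Aof \<omega>) j) \<partial>Q)"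
  then show "(\<integral>\<^sup>+\<omega>. c * u \<omega> * indicator {\<omega>. Aof \<omega> t = j} \<omega> \<partial>Q) = (\<integral>\<^sup>+\<omega>. c * u \<omega> * ennreal (nu t (Wof \<omega>) (Aof \<omega>) j) \<partial>Q)"
    by (simp add: mult.assoc nn_integral_cmult)
next
  fix u v :: "traj \<Rightarrow> ennreal" assume "u \<in> borel_measurable trajM" "v \<in> borel_measurable trajM" and
    "(\<integral>\<^sup>+\<omega>. u \<omega> * indicator {\<omega>. Aof \<omega> t = j} \<omega> \<partial>Q) = (\<integral>\<^sup>+\<omega>. u \<omega> * ennreal (nu t (Wof \<omega>) (Aof \<omega>) j) \<partial>Q)"
    "(\<integral>\<^sup>+\<omega>. v \<omega> * indicator {\<omega>. Aof \<omega> t = j} \<omega> \<partial>Q) = (\<integral>\<^sup>+\<omega>. v \<omega> * ennreal (nu t (Wof \<omega>) (Aof \<omega>) j) \<partial>Q)"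
  then show "(\<integral>\<^sup>+\<omega>. (v \<omega> + u \<omega>) * indicator {\<omega>. Aof \<omega> t = j} \<omega> \<partial>Q) = (\<integral>\<^sup>+\<omega>. (v \<omega> + u \<omega>) * ennreal (nu t (Wof \<omega>) (Aof \<omega>) j) \<partial>Q)"
    by (simp add: distrib_right nn_integral_add)
next
  fix U :: "nat \<Rightarrow> traj \<Rightarrow> ennreal" assume seq: "\<And>i. U i \<in> borel_measurable trajM" "incseq U"
    "\<And>i. (\<integral>\<^sup>+\<omega>. U i \<omega> * indicator {\<omega>. Aof \<omega> t = j} \<omega> \<partial>Q) = (\<integral>\<^sup>+\<omega>. U i \<omega> * ennreal (nu t (Wof \<omega>) (Aof \<omega>) j) \<partial>Q)"
  have "(\<integral>\<^sup>+\<omega>. (SUP i. U i) \<omega> * indicator {\<omega>. Aof \<omega> t = j} \<omega> \<partial>Q) = (\<integral>\<^sup>+\<omega>. (SUP i. U i \<omega> * indicator {\<omega>. Aof \<omega> t = j} \<omega>) \<partial>Q)"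
    unfolding SUP_apply by (simp add: SUP_mult_right_ennreal)
  also have "\<dots> = (SUP i. \<integral>\<^sup>+\<omega>. U i \<omega> * indicator {\<omega>. Aof \<omega> t = j} \<omega> \<partial>Q)"
    using seq by (intro nn_integral_monotone_convergence_SUP) (auto simp: incseq_def le_fun_def intro: mult_right_mono)
  also have "\<dots> = (SUP i. \<integral>\<^sup>+\<omega>. U i \<omega> * ennreal (nu t (Wof \<omega>) (Aof \<omega>) j) \<partial>Q)"
    using seq by simp
  also have "\<dots> = (\<integral>\<^sup>+\<omega>. (SUP i. U i \<omega> * ennreal (nu t (Wof \<omega>) (Aof \<omega>) j)) \<partial>Q)"
    using seq by (intro nn_integral_monotone_convergence_SUP[symmetric]) (auto simp: incseq_def le_fun_def intro: mult_right_mono)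
  also have "\<dots> = (\<integral>\<^sup>+\<omega>. (SUP i. U i) \<omega> * ennreal (nu t (Wof \<omega>) (Aof \<omega>) j) \<partial>Q)"
    unfolding SUP_apply by (simp add: SUP_mult_right_ennreal)
  finally show "(\<integral>\<^sup>+\<omega>. (SUP i. U i) \<omega> * indicator {\<omega>. Aof \<omega> t = j} \<omega> \<partial>Q) = (\<integral>\<^sup>+\<omega>. (SUP i. U i) \<omega> * ennreal (nu t (Wof \<omega>) (Aof \<omega>) j) \<partial>Q)" .
qed

lemma L2_set:
  assumes B: "data_event t B" and j: "j \<in> {1..K}" and sP: "sets (P j) = sets borel"
    and g: "g \<in> borel_measurable borel"
  shows "(\<integral>\<^sup>+\<omega>. indicator B \<omega> * indicator {\<omega>. Aof \<omega> t = j} \<omega> * g (Yof \<omega> t) \<partial>Q) =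
         emeasure Q (B \<inter> {\<omega>. Aof \<omega> t = j}) * (\<integral>\<^sup>+y. g y \<partial>P j)"
  using g
proof (induction rule: borel_measurable_induct)
  case (cong f h)
  then have "f = h" by auto
  then show ?case using cong by simp
next
  case (set C)
  have [measurable]: "B \<in> sets trajM" using B by (simp add: data_event_def)
  have [measurable]: "C \<in> sets borel" using set by simp
  have "(\<integral>\<^sup>+\<omega>. indicator B \<omega> * indicator {\<omega>. Aof \<omega> t = j} \<omega> * indicator C (Yof \<omega> t) \<partial>Q)
      = (\<integral>\<^sup>+\<omega>. indicator (B \<inter> {\<omega>. Aof \<omega> t = j} \<inter> {\<omega>. Yof \<omega> t \<in> C}) \<omega> \<partial>Q)"
    by (intro nn_integral_cong) (simp split: split_indicator)
  also have "\<dots> = emeasure Q (B \<inter> {\<omega>. Aof \<omega> t = j} \<inter> {\<omega>. Yof \<omega> t \<in> C})"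
    by (intro nn_integral_indicator) measurable
  also have "\<dots> = emeasure Q (B \<inter> {\<omega>. Aof \<omega> t = j}) * emeasure (P j) C"
    using law2[OF B j] set by simp
  also have "emeasure (P j) C = (\<integral>\<^sup>+y. indicator C y \<partial>P j)"
    using set sP by (simp add: nn_integral_indicator)
  finally show ?case .
next
  case (mult u c)
  have [measurable]: "B \<in> sets trajM" using B by (simp add: data_event_def)
  have [measurable]: "u \<in> borel_measurable borel" using mult by auto
  have "(\<integral>\<^sup>+\<omega>. indicator B \<omega> * indicator {\<omega>. Aof \<omega> t = j} \<omega> * (c * u (Yof \<omega> t)) \<partial>Q)
     = (\<integral>\<^sup>+\<omega>. c * (indicator B \<omega> * indicator {\<omega>. Aof \<omega> t = j} \<omega> * u (Yof \<omega> t)) \<partial>Q)"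
    by (intro nn_integral_cong) (simp only: mult.left_commute)
  also have "\<dots> = c * (\<integral>\<^sup>+\<omega>. indicator B \<omega> * indicator {\<omega>. Aof \<omega> t = j} \<omega> * u (Yof \<omega> t) \<partial>Q)"
    by (intro nn_integral_cmult) measurable
  also have "\<dots> = c * (emeasure Q (B \<inter> {\<omega>. Aof \<omega> t = j}) * (\<integral>\<^sup>+y. u y \<partial>P j))"
    using mult by simp
  also have "\<dots> = emeasure Q (B \<inter> {\<omega>. Aof \<omega> t = j}) * (c * (\<integral>\<^sup>+y. u y \<partial>P j))"
    by (simp only: mult.left_commute)
  also have "c * (\<integral>\<^sup>+y. u y \<partial>P j) = (\<integral>\<^sup>+y. c * u y \<partial>P j)"
    using mult sP by (intro nn_integral_cmult[symmetric]) (simp add: measurable_cong_sets[OF sP refl])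
  finally show ?case .
next
  case (add u v)
  have [measurable]: "B \<in> sets trajM" using B by (simp add: data_event_def)
  have mu[measurable]: "u \<in> borel_measurable borel" "v \<in> borel_measurable borel" using add by auto
  have "(\<integral>\<^sup>+\<omega>. indicator B \<omega> * indicator {\<omega>. Aof \<omega> t = j} \<omega> * (v (Yof \<omega> t) + u (Yof \<omega> t)) \<partial>Q)
     = (\<integral>\<^sup>+\<omega>. indicator B \<omega> * indicator {\<omega>. Aof \<omega> t = j} \<omega> * v (Yof \<omega> t) + indicator B \<omega> * indicator {\<omega>. Aof \<omega> t = j} \<omega> * u (Yof \<omega> t) \<partial>Q)"
    by (simp add: distrib_left)
  also have "\<dots> = (\<integral>\<^sup>+\<omega>. indicator B \<omega> * indicator {\<omega>. Aof \<omega> t = j} \<omega> * v (Yof \<omega> t) \<partial>Q) + (\<integral>\<^sup>+\<omega>. indicator B \<omega> * indicator {\<omega>. Aof \<omega> t = j} \<omega> * u (Yof \<omega> t) \<partial>Q)"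
    by (intro nn_integral_add) measurable
  also have "\<dots> = emeasure Q (B \<inter> {\<omega>. Aof \<omega> t = j}) * ((\<integral>\<^sup>+y. v y \<partial>P j) + (\<integral>\<^sup>+y. u y \<partial>P j))"
    using add by (simp add: distrib_left)
  also have "(\<integral>\<^sup>+y. v y \<partial>P j) + (\<integral>\<^sup>+y. u y \<partial>P j) = (\<integral>\<^sup>+y. v y + u y \<partial>P j)"
    using sP by (intro nn_integral_add[symmetric]) (simp_all add: measurable_cong_sets[OF sP refl])
  finally show ?case .
next
  case (seq U)
  have [measurable]: "B \<in> sets trajM" using B by (simp add: data_event_def)
  have mU[measurable]: "\<And>i. U i \<in> borel_measurable borel" using seq by auto
  have "(\<integral>\<^sup>+\<omega>. indicator B \<omega> * indicator {\<omega>. Aof \<omega> t = j} \<omega> * (SUP i. U i) (Yof \<omega> t) \<partial>Q)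
     = (\<integral>\<^sup>+\<omega>. (SUP i. indicator B \<omega> * indicator {\<omega>. Aof \<omega> t = j} \<omega> * U i (Yof \<omega> t)) \<partial>Q)"
    unfolding SUP_apply by (simp add: SUP_mult_left_ennreal)
  also have "\<dots> = (SUP i. \<integral>\<^sup>+\<omega>. indicator B \<omega> * indicator {\<omega>. Aof \<omega> t = j} \<omega> * U i (Yof \<omega> t) \<partial>Q)"
    using seq by (intro nn_integral_monotone_convergence_SUP) (auto simp: incseq_def le_fun_def intro: mult_left_mono)
  also have "\<dots> = (SUP i. emeasure Q (B \<inter> {\<omega>. Aof \<omega> t = j}) * (\<integral>\<^sup>+y. U i y \<partial>P j))"
    using seq by simp
  also have "\<dots> = emeasure Q (B \<inter> {\<omega>. Aof \<omega> t = j}) * (SUP i. (\<integral>\<^sup>+y. U i y \<partial>P j))"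
    by (simp add: SUP_mult_left_ennreal)
  also have "(SUP i. (\<integral>\<^sup>+y. U i y \<partial>P j)) = (\<integral>\<^sup>+y. (SUP i. U i y) \<partial>P j)"
    using seq sP by (intro nn_integral_monotone_convergence_SUP[symmetric]) (auto simp: incseq_def le_fun_def measurable_cong_sets[OF sP refl])
  also have "(\<integral>\<^sup>+y. (SUP i. U i y) \<partial>P j) = (\<integral>\<^sup>+y. (SUP i. U i) y \<partial>P j)"
    unfolding SUP_apply by simp
  finally show ?case .
qed

lemma ind_int: "B \<in> sets trajM \<Longrightarrow> C \<in> sets trajM \<Longrightarrow>
  (\<integral>\<^sup>+\<omega>. indicator B \<omega> * indicator C \<omega> \<partial>Q) = emeasure Q (B \<inter> C)"
proof -
  assume [measurable]: "B \<in> sets trajM" "C \<in> sets trajM"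
  have "(\<integral>\<^sup>+\<omega>. indicator B \<omega> * indicator C \<omega> \<partial>Q) = (\<integral>\<^sup>+\<omega>. indicator (B \<inter> C) \<omega> \<partial>Q)"
    by (intro nn_integral_cong) (simp split: split_indicator)
  also have "\<dots> = emeasure Q (B \<inter> C)"
    by (rule nn_integral_indicator) measurable
  finally show ?thesis .
qed

lemma Aset[measurable]: "{\<omega>. Aof \<omega> t = j} \<in> sets trajM"
proof -
  have "(\<lambda>\<omega>. Aof \<omega> t) -` {j} \<inter> space trajM \<in> sets trajM" by (rule measurable_sets[OF meas_A]) simp
  moreover have "(\<lambda>\<omega>. Aof \<omega> t) -` {j} \<inter> space trajM = {\<omega>. Aof \<omega> t = j}" by auto
  ultimately show ?thesis by simp
qed

lemma L2:
  assumes u: "u \<in> borel_measurable trajM" "\<And>\<omega> \<omega>'. prefix_eq t \<omega> \<omega>' \<Longrightarrow> u \<omega> = u \<omega>'"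
    and j: "j \<in> {1..K}" and sP: "sets (P j) = sets borel"
    and g[measurable]: "g \<in> borel_measurable borel"
  shows "(\<integral>\<^sup>+\<omega>. u \<omega> * indicator {\<omega>. Aof \<omega> t = j} \<omega> * g (Yof \<omega> t) \<partial>Q) =
         (\<integral>\<^sup>+\<omega>. u \<omega> * indicator {\<omega>. Aof \<omega> t = j} \<omega> \<partial>Q) * (\<integral>\<^sup>+y. g y \<partial>P j)"
proof (rule data_induct[OF u])
  fix B assume B: "data_event t B"
  then have [measurable]: "B \<in> sets trajM" by (simp add: data_event_def)
  show "(\<integral>\<^sup>+\<omega>. indicator B \<omega> * indicator {\<omega>. Aof \<omega> t = j} \<omega> * g (Yof \<omega> t) \<partial>Q) =
         (\<integral>\<^sup>+\<omega>. indicator B \<omega> * indicator {\<omega>. Aof \<omega> t = j} \<omega> \<partial>Q) * (\<integral>\<^sup>+y. g y \<partial>P j)"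
    using L2_set[OF B j sP g] by (subst ind_int) (auto simp del: Collect_mem_eq)
next
  fix u :: "traj \<Rightarrow> ennreal" and c assume [measurable]: "u \<in> borel_measurable trajM" and
    IH: "(\<integral>\<^sup>+\<omega>. u \<omega> * indicator {\<omega>. Aof \<omega> t = j} \<omega> * g (Yof \<omega> t) \<partial>Q) =
         (\<integral>\<^sup>+\<omega>. u \<omega> * indicator {\<omega>. Aof \<omega> t = j} \<omega> \<partial>Q) * (\<integral>\<^sup>+y. g y \<partial>P j)"
  have "(\<integral>\<^sup>+\<omega>. c * u \<omega> * indicator {\<omega>. Aof \<omega> t = j} \<omega> * g (Yof \<omega> t) \<partial>Q) =
     c * (\<integral>\<^sup>+\<omega>. u \<omega> * indicator {\<omega>. Aof \<omega> t = j} \<omega> * g (Yof \<omega> t) \<partial>Q)"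
    by (subst nn_integral_cmult[symmetric]) (measurable, simp only: mult.assoc)
  also have "\<dots> = (c * (\<integral>\<^sup>+\<omega>. u \<omega> * indicator {\<omega>. Aof \<omega> t = j} \<omega> \<partial>Q)) * (\<integral>\<^sup>+y. g y \<partial>P j)"
    using IH by (simp only: mult.assoc)
  also have "c * (\<integral>\<^sup>+\<omega>. u \<omega> * indicator {\<omega>. Aof \<omega> t = j} \<omega> \<partial>Q) = (\<integral>\<^sup>+\<omega>. c * u \<omega> * indicator {\<omega>. Aof \<omega> t = j} \<omega> \<partial>Q)"
    by (subst nn_integral_cmult[symmetric]) (measurable, simp only: mult.assoc)
  finally show "(\<integral>\<^sup>+\<omega>. c * u \<omega> * indicator {\<omega>. Aof \<omega> t = j} \<omega> * g (Yof \<omega> t) \<partial>Q) =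
         (\<integral>\<^sup>+\<omega>. c * u \<omega> * indicator {\<omega>. Aof \<omega> t = j} \<omega> \<partial>Q) * (\<integral>\<^sup>+y. g y \<partial>P j)" .
next
  fix u v :: "traj \<Rightarrow> ennreal" assume [measurable]: "u \<in> borel_measurable trajM" "v \<in> borel_measurable trajM" and
    IH: "(\<integral>\<^sup>+\<omega>. u \<omega> * indicator {\<omega>. Aof \<omega> t = j} \<omega> * g (Yof \<omega> t) \<partial>Q) =
         (\<integral>\<^sup>+\<omega>. u \<omega> * indicator {\<omega>. Aof \<omega> t = j} \<omega> \<partial>Q) * (\<integral>\<^sup>+y. g y \<partial>P j)"
        "(\<integral>\<^sup>+\<omega>. v \<omega> * indicator {\<omega>. Aof \<omega> t = j} \<omega> * g (Yof \<omega> t) \<partial>Q) =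
         (\<integral>\<^sup>+\<omega>. v \<omega> * indicator {\<omega>. Aof \<omega> t = j} \<omega> \<partial>Q) * (\<integral>\<^sup>+y. g y \<partial>P j)"
  have "(\<integral>\<^sup>+\<omega>. (v \<omega> + u \<omega>) * indicator {\<omega>. Aof \<omega> t = j} \<omega> * g (Yof \<omega> t) \<partial>Q) =
     (\<integral>\<^sup>+\<omega>. v \<omega> * indicator {\<omega>. Aof \<omega> t = j} \<omega> * g (Yof \<omega> t) \<partial>Q) + (\<integral>\<^sup>+\<omega>. u \<omega> * indicator {\<omega>. Aof \<omega> t = j} \<omega> * g (Yof \<omega> t) \<partial>Q)"
    by (subst nn_integral_add[symmetric]) (measurable, simp only: distrib_right)
  also have "\<dots> = ((\<integral>\<^sup>+\<omega>. v \<omega> * indicator {\<omega>. Aof \<omega> t = j} \<omega> \<partial>Q) + (\<integral>\<^sup>+\<omega>. u \<omega> * indicator {\<omega>. Aof \<omega> t = j} \<omega> \<partial>Q)) * (\<integral>\<^sup>+y. g y \<partial>P j)"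
    using IH by (simp only: distrib_right)
  also have "(\<integral>\<^sup>+\<omega>. v \<omega> * indicator {\<omega>. Aof \<omega> t = j} \<omega> \<partial>Q) + (\<integral>\<^sup>+\<omega>. u \<omega> * indicator {\<omega>. Aof \<omega> t = j} \<omega> \<partial>Q) = (\<integral>\<^sup>+\<omega>. (v \<omega> + u \<omega>) * indicator {\<omega>. Aof \<omega> t = j} \<omega> \<partial>Q)"
    by (subst nn_integral_add[symmetric]) (measurable, simp only: distrib_right)
  finally show "(\<integral>\<^sup>+\<omega>. (v \<omega> + u \<omega>) * indicator {\<omega>. Aof \<omega> t = j} \<omega> * g (Yof \<omega> t) \<partial>Q) =
         (\<integral>\<^sup>+\<omega>. (v \<omega> + u \<omega>) * indicator {\<omega>. Aof \<omega> t = j} \<omega> \<partial>Q) * (\<integral>\<^sup>+y. g y \<partial>P j)" .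
next
  fix U :: "nat \<Rightarrow> traj \<Rightarrow> ennreal" assume [measurable]: "\<And>i. U i \<in> borel_measurable trajM" and inc: "incseq U" and
    IH: "\<And>i. (\<integral>\<^sup>+\<omega>. U i \<omega> * indicator {\<omega>. Aof \<omega> t = j} \<omega> * g (Yof \<omega> t) \<partial>Q) =
         (\<integral>\<^sup>+\<omega>. U i \<omega> * indicator {\<omega>. Aof \<omega> t = j} \<omega> \<partial>Q) * (\<integral>\<^sup>+y. g y \<partial>P j)"
  have "(\<integral>\<^sup>+\<omega>. (SUP i. U i) \<omega> * indicator {\<omega>. Aof \<omega> t = j} \<omega> * g (Yof \<omega> t) \<partial>Q) =
        (\<integral>\<^sup>+\<omega>. (SUP i. U i \<omega> * indicator {\<omega>. Aof \<omega> t = j} \<omega> * g (Yof \<omega> t)) \<partial>Q)"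
    unfolding SUP_apply by (simp add: SUP_mult_right_ennreal)
  also have "\<dots> = (SUP i. \<integral>\<^sup>+\<omega>. U i \<omega> * indicator {\<omega>. Aof \<omega> t = j} \<omega> * g (Yof \<omega> t) \<partial>Q)"
    using inc by (intro nn_integral_monotone_convergence_SUP) (auto simp: incseq_def le_fun_def intro!: mult_right_mono)
  also have "\<dots> = (SUP i. \<integral>\<^sup>+\<omega>. U i \<omega> * indicator {\<omega>. Aof \<omega> t = j} \<omega> \<partial>Q) * (\<integral>\<^sup>+y. g y \<partial>P j)"
    unfolding IH by (simp add: SUP_mult_right_ennreal)
  also have "(SUP i. \<integral>\<^sup>+\<omega>. U i \<omega> * indicator {\<omega>. Aof \<omega> t = j} \<omega> \<partial>Q) = (\<integral>\<^sup>+\<omega>. (SUP i. U i \<omega> * indicator {\<omega>. Aof \<omega> t = j} \<omega>) \<partial>Q)"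
    using inc by (intro nn_integral_monotone_convergence_SUP[symmetric]) (auto simp: incseq_def le_fun_def intro!: mult_right_mono)
  also have "\<dots> = (\<integral>\<^sup>+\<omega>. (SUP i. U i) \<omega> * indicator {\<omega>. Aof \<omega> t = j} \<omega> \<partial>Q)"
    unfolding SUP_apply by (simp add: SUP_mult_right_ennreal)
  finally show "(\<integral>\<^sup>+\<omega>. (SUP i. U i) \<omega> * indicator {\<omega>. Aof \<omega> t = j} \<omega> * g (Yof \<omega> t) \<partial>Q) =
         (\<integral>\<^sup>+\<omega>. (SUP i. U i) \<omega> * indicator {\<omega>. Aof \<omega> t = j} \<omega> \<partial>Q) * (\<integral>\<^sup>+y. g y \<partial>P j)" .
qed

lemma E1: "AE \<omega> in Q. Aof \<omega> t \<in> {1..K}"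
proof -
  have "emeasure Q {\<omega>. Aof \<omega> t \<in> {1..K}} = (\<integral>\<^sup>+\<omega>. (\<Sum>j\<in>{1..K}. indicator {\<omega>. Aof \<omega> t = j} \<omega>) \<partial>Q)"
  proof -
    have "{\<omega>. Aof \<omega> t \<in> {1..K}} = (\<Union>j\<in>{1..K}. {\<omega>. Aof \<omega> t = j})" by auto
    then have [measurable]: "{\<omega>. Aof \<omega> t \<in> {1..K}} \<in> sets trajM" by simp
    have "emeasure Q {\<omega>. Aof \<omega> t \<in> {1..K}} = (\<integral>\<^sup>+\<omega>. indicator {\<omega>. Aof \<omega> t \<in> {1..K}} \<omega> \<partial>Q)"
      by (rule nn_integral_indicator[symmetric]) measurable
    also have "\<dots> = (\<integral>\<^sup>+\<omega>. (\<Sum>j\<in>{1..K}. indicator {\<omega>. Aof \<omega> t = j} \<omega>) \<partial>Q)"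
      by (intro nn_integral_cong) (auto simp: indicator_def sum.delta)
    finally show ?thesis .
  qed
  also have "\<dots> = (\<Sum>j\<in>{1..K}. \<integral>\<^sup>+\<omega>. indicator {\<omega>. Aof \<omega> t = j} \<omega> \<partial>Q)"
    by (rule nn_integral_sum) simp
  also have "\<dots> = (\<Sum>j\<in>{1..K}. \<integral>\<^sup>+\<omega>. ennreal (nu t (Wof \<omega>) (Aof \<omega>) j) \<partial>Q)"
    using L1[of "\<lambda>_. 1" t] by simp
  also have "\<dots> = (\<integral>\<^sup>+\<omega>. (\<Sum>j\<in>{1..K}. ennreal (nu t (Wof \<omega>) (Aof \<omega>) j)) \<partial>Q)"
    by (rule nn_integral_sum[symmetric]) simp
  also have "\<dots> = (\<integral>\<^sup>+\<omega>. 1 \<partial>Q)"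
    using alg by (intro nn_integral_cong) (simp add: nu_nonneg nonadaptive_alg_def)
  also have "\<dots> = 1" using Q.emeasure_space_1 by simp
  finally have "emeasure Q {\<omega>. Aof \<omega> t \<in> {1..K}} = 1" .
  then have "Q.prob {\<omega>. Aof \<omega> t \<in> {1..K}} = 1" by (simp add: Q.emeasure_eq_measure)
  from Q.AE_prob_1[OF this] show ?thesis by simp
qed

lemma avg:
  fixes h f :: "traj \<Rightarrow> real"
  assumes [measurable]: "h \<in> borel_measurable trajM" "f \<in> borel_measurable trajM"
    and hpos: "\<And>\<omega>. 0 \<le> h \<omega>" and fpos: "\<And>\<omega>. 0 \<le> f \<omega>"
    and hdet: "\<And>\<omega> \<omega>'. Wof \<omega> = Wof \<omega>' \<Longrightarrow> (\<forall>i<Suc t. Aof \<omega> i = Aof \<omega>' i) \<Longrightarrow> h \<omega> = h \<omega>'"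
    and fdet: "\<And>\<omega> \<omega>'. prefix_eq t \<omega> \<omega>' \<Longrightarrow> f \<omega> = f \<omega>'"
  shows "(\<integral>\<^sup>+\<omega>. ennreal (h \<omega> * f \<omega>) \<partial>Q) =
    (\<integral>\<^sup>+\<omega>. ennreal ((\<Sum>j\<in>{1..K}. nu t (Wof \<omega>) (Aof \<omega>) j * h (setA t j \<omega>)) * f \<omega>) \<partial>Q)"
proof -
  have "(\<integral>\<^sup>+\<omega>. ennreal (h \<omega> * f \<omega>) \<partial>Q) =
     (\<integral>\<^sup>+\<omega>. (\<Sum>j\<in>{1..K}. ennreal (h (setA t j \<omega>) * f \<omega>) * indicator {\<omega>. Aof \<omega> t = j} \<omega>) \<partial>Q)"
  proof (rule nn_integral_cong_AE)
    show "AE \<omega> in Q. ennreal (h \<omega> * f \<omega>) = (\<Sum>j\<in>{1..K}. ennreal (h (setA t j \<omega>) * f \<omega>) * indicator {\<omega>. Aof \<omega> t = j} \<omega>)"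
      using E1[of t]
    proof eventually_elim
      case (elim \<omega>)
      have "(\<Sum>j\<in>{1..K}. ennreal (h (setA t j \<omega>) * f \<omega>) * indicator {\<omega>. Aof \<omega> t = j} \<omega>)
          = (\<Sum>j\<in>{1..K}. if Aof \<omega> t = j then ennreal (h (setA t j \<omega>) * f \<omega>) else 0)"
        by (intro sum.cong) (auto simp: indicator_def)
      also have "\<dots> = ennreal (h (setA t (Aof \<omega> t) \<omega>) * f \<omega>)"
        using elim by (simp add: sum.delta)
      finally show ?case by (simp add: setA_self)
    qed
  qed
  also have "\<dots> = (\<Sum>j\<in>{1..K}. \<integral>\<^sup>+\<omega>. ennreal (h (setA t j \<omega>) * f \<omega>) * indicator {\<omega>. Aof \<omega> t = j} \<omega> \<partial>Q)"
    by (rule nn_integral_sum) measurable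
  also have "\<dots> = (\<Sum>j\<in>{1..K}. \<integral>\<^sup>+\<omega>. ennreal (h (setA t j \<omega>) * f \<omega>) * ennreal (nu t (Wof \<omega>) (Aof \<omega>) j) \<partial>Q)"
  proof (intro sum.cong refl L1)
    fix j show "(\<lambda>\<omega>. ennreal (h (setA t j \<omega>) * f \<omega>)) \<in> borel_measurable trajM" by measurable
    fix \<omega> \<omega>' assume pe: "prefix_eq t \<omega> \<omega>'"
    then have "h (setA t j \<omega>) = h (setA t j \<omega>')"
      by (intro hdet) (auto simp: prefix_eq_def less_Suc_eq)
    then show "ennreal (h (setA t j \<omega>) * f \<omega>) = ennreal (h (setA t j \<omega>') * f \<omega>')"
      using fdet[OF pe] by simp
  qed
  also have "\<dots> = (\<integral>\<^sup>+\<omega>. (\<Sum>j\<in>{1..K}. ennreal (h (setA t j \<omega>) * f \<omega>) * ennreal (nu t (Wof \<omega>) (Aof \<omega>) j)) \<partial>Q)"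
    by (rule nn_integral_sum[symmetric]) measurable
  also have "\<dots> = (\<integral>\<^sup>+\<omega>. ennreal ((\<Sum>j\<in>{1..K}. nu t (Wof \<omega>) (Aof \<omega>) j * h (setA t j \<omega>)) * f \<omega>) \<partial>Q)"
  proof (intro nn_integral_cong)
    fix \<omega>
    have "(\<Sum>j\<in>{1..K}. ennreal (h (setA t j \<omega>) * f \<omega>) * ennreal (nu t (Wof \<omega>) (Aof \<omega>) j))
       = (\<Sum>j\<in>{1..K}. ennreal (nu t (Wof \<omega>) (Aof \<omega>) j * h (setA t j \<omega>) * f \<omega>))"
      using hpos fpos nu_nonneg by (intro sum.cong refl) (simp add: ennreal_mult'[symmetric] mult_ac)
    also have "\<dots> = ennreal (\<Sum>j\<in>{1..K}. nu t (Wof \<omega>) (Aof \<omega>) j * h (setA t j \<omega>) * f \<omega>)"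
      using hpos fpos nu_nonneg by (intro sum_ennreal) simp
    finally show "(\<Sum>j\<in>{1..K}. ennreal (h (setA t j \<omega>) * f \<omega>) * ennreal (nu t (Wof \<omega>) (Aof \<omega>) j))
      = ennreal ((\<Sum>j\<in>{1..K}. nu t (Wof \<omega>) (Aof \<omega>) j * h (setA t j \<omega>)) * f \<omega>)"
      by (simp add: sum_distrib_right)
  qed
  finally show ?thesis .
qed

end

definition Hdet :: "nat \<Rightarrow> (traj \<Rightarrow> real) \<Rightarrow> bool" where
  "Hdet t h \<longleftrightarrow> h \<in> borel_measurable trajM \<and> (\<forall>\<omega>. 0 \<le> h \<omega> \<and> h \<omega> \<le> 1) \<and>
     (\<forall>\<omega> \<omega>'. Wof \<omega> = Wof \<omega>' \<and> (\<forall>i<t. Aof \<omega> i = Aof \<omega>' i) \<longrightarrow> h \<omega> = h \<omega>')"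

lemma Hdet_prefix: "Hdet t h \<Longrightarrow> prefix_eq t \<omega> \<omega>' \<Longrightarrow> h \<omega> = h \<omega>'"
  unfolding Hdet_def prefix_eq_def by blast

lemma Hdet_setA: assumes "Hdet (Suc t) h" shows "Hdet t (\<lambda>\<omega>. h (setA t j \<omega>))"
proof -
  have m: "h \<in> borel_measurable trajM" and b: "\<And>\<omega>. 0 \<le> h \<omega> \<and> h \<omega> \<le> 1"
    and d: "\<And>\<omega> \<omega>'. Wof \<omega> = Wof \<omega>' \<Longrightarrow> (\<forall>i<Suc t. Aof \<omega> i = Aof \<omega>' i) \<Longrightarrow> h \<omega> = h \<omega>'"
    using assms unfolding Hdet_def by blast+
  have "(\<lambda>\<omega>. h (setA t j \<omega>)) \<in> borel_measurable trajM"
    using measurable_compose[OF meas_setA m] by (simp add: o_def)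
  moreover have "\<forall>\<omega>. 0 \<le> h (setA t j \<omega>) \<and> h (setA t j \<omega>) \<le> 1" using b by blast
  moreover have "\<forall>\<omega> \<omega>'. Wof \<omega> = Wof \<omega>' \<and> (\<forall>i<t. Aof \<omega> i = Aof \<omega>' i) \<longrightarrow> h (setA t j \<omega>) = h (setA t j \<omega>')"
    by (auto intro!: d simp: less_Suc_eq)
  ultimately show ?thesis unfolding Hdet_def by blast
qed

lemma Hdet_const: "0 \<le> c \<Longrightarrow> c \<le> 1 \<Longrightarrow> Hdet t (\<lambda>_. c)"
  unfolding Hdet_def by auto

context bandit
begin

lemma nu_sum: "(\<Sum>j\<in>{1..K}. nu t w a j) = 1"
  using alg by (simp add: nonadaptive_alg_def)

lemma nu_det: "(\<forall>i<t. a i = a' i) \<Longrightarrow> nu t w a = nu t w a'"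
  using alg unfolding nonadaptive_alg_def by blast

lemma Hdet_avg: assumes "Hdet (Suc t) h"
  shows "Hdet t (\<lambda>\<omega>. \<Sum>j\<in>{1..K}. nu t (Wof \<omega>) (Aof \<omega>) j * h (setA t j \<omega>))"
proof -
  have hj: "\<And>j. Hdet t (\<lambda>\<omega>. h (setA t j \<omega>))" by (rule Hdet_setA[OF assms])
  then have [measurable]: "\<And>j. (\<lambda>\<omega>. h (setA t j \<omega>)) \<in> borel_measurable trajM" unfolding Hdet_def by blast
  have b: "\<And>\<omega> j. 0 \<le> h (setA t j \<omega>) \<and> h (setA t j \<omega>) \<le> 1" using hj unfolding Hdet_def by blast
  have "(\<lambda>\<omega>. \<Sum>j\<in>{1..K}. nu t (Wof \<omega>) (Aof \<omega>) j * h (setA t j \<omega>)) \<in> borel_measurable trajM"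
    by measurable
  moreover have "\<forall>\<omega>. 0 \<le> (\<Sum>j\<in>{1..K}. nu t (Wof \<omega>) (Aof \<omega>) j * h (setA t j \<omega>)) \<and>
      (\<Sum>j\<in>{1..K}. nu t (Wof \<omega>) (Aof \<omega>) j * h (setA t j \<omega>)) \<le> 1"
  proof
    fix \<omega>
    have le: "(\<Sum>j\<in>{1..K}. nu t (Wof \<omega>) (Aof \<omega>) j * h (setA t j \<omega>)) \<le> (\<Sum>j\<in>{1..K}. nu t (Wof \<omega>) (Aof \<omega>) j)"
      using b nu_nonneg by (intro sum_mono) (simp add: mult_left_le)
    show "0 \<le> (\<Sum>j\<in>{1..K}. nu t (Wof \<omega>) (Aof \<omega>) j * h (setA t j \<omega>)) \<and>
      (\<Sum>j\<in>{1..K}. nu t (Wof \<omega>) (Aof \<omega>) j * h (setA t j \<omega>)) \<le> 1"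
    proof (intro conjI)
      show "0 \<le> (\<Sum>j\<in>{1..K}. nu t (Wof \<omega>) (Aof \<omega>) j * h (setA t j \<omega>))"
        by (intro sum_nonneg mult_nonneg_nonneg nu_nonneg) (use b in blast)
    qed (use nu_sum le in simp)
  qed
  moreover have "\<forall>\<omega> \<omega>'. Wof \<omega> = Wof \<omega>' \<and> (\<forall>i<t. Aof \<omega> i = Aof \<omega>' i) \<longrightarrow>
     (\<Sum>j\<in>{1..K}. nu t (Wof \<omega>) (Aof \<omega>) j * h (setA t j \<omega>)) = (\<Sum>j\<in>{1..K}. nu t (Wof \<omega>') (Aof \<omega>') j * h (setA t j \<omega>'))"
  proof (intro allI impI)
    fix \<omega> \<omega>' assume a: "Wof \<omega> = Wof \<omega>' \<and> (\<forall>i<t. Aof \<omega> i = Aof \<omega>' i)"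
    then have "nu t (Wof \<omega>) (Aof \<omega>) = nu t (Wof \<omega>') (Aof \<omega>')" using nu_det by metis
    moreover have "\<And>j. h (setA t j \<omega>) = h (setA t j \<omega>')" using hj a unfolding Hdet_def by blast
    ultimately show "(\<Sum>j\<in>{1..K}. nu t (Wof \<omega>) (Aof \<omega>) j * h (setA t j \<omega>)) = (\<Sum>j\<in>{1..K}. nu t (Wof \<omega>') (Aof \<omega>') j * h (setA t j \<omega>'))"
      by simp
  qed
  ultimately show ?thesis unfolding Hdet_def by blast
qed

end

locale armk = bandit +
  fixes k :: nat and \<sigma> :: real
  assumes k: "k \<in> {1..K}" and vc: "var_class \<sigma> (P k)"
begin

abbreviation "mu \<equiv> mean (P k)"

lemma sPk[measurable_cong]: "sets (P k) = sets borel"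
  using vc by (simp add: var_class_def arm_dist_def)

lemma Pk_prob: "prob_space (P k)"
  using vc by (simp add: var_class_def arm_dist_def)

lemma Pk_int1: "integrable (P k) (\<lambda>x. x)" and Pk_int2: "integrable (P k) (\<lambda>x. x\<^sup>2)"
  and Pk_var: "(\<integral>x. (x - mu)\<^sup>2 \<partial>P k) = \<sigma>\<^sup>2"
  using vc by (simp_all add: var_class_def arm_dist_def)

lemma Pk_intc: "integrable (P k) (\<lambda>x. c)"
  using Pk_prob prob_space.finite_measure finite_measure.integrable_const by blast

lemma Pk_intsq: "integrable (P k) (\<lambda>x. (x - mu)\<^sup>2)"
proof -
  have "integrable (P k) (\<lambda>x. x\<^sup>2 - 2 * mu * x + mu\<^sup>2)"
    by (rule Bochner_Integration.integrable_add[OF Bochner_Integration.integrable_diff[OF Pk_int2 integrable_mult_right[OF Pk_int1]] Pk_intc])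
  then show ?thesis by (simp add: power2_diff algebra_simps)
qed

lemma Pk_nnsq: "(\<integral>\<^sup>+y. ennreal ((y - mu)\<^sup>2) \<partial>P k) = ennreal (\<sigma>\<^sup>2)"
  using Pk_intsq Pk_var by (subst nn_integral_eq_integral) auto

lemma Pk_pm: "(\<integral>\<^sup>+y. ennreal (max (y - mu) 0) \<partial>P k) = (\<integral>\<^sup>+y. ennreal (max (mu - y) 0) \<partial>P k)"
  and Pk_pm_fin: "(\<integral>\<^sup>+y. ennreal (max (y - mu) 0) \<partial>P k) < \<infinity>"
proof -
  interpret Pk: prob_space "P k" by (rule Pk_prob)
  have i1: "integrable (P k) (\<lambda>y. max (y - mu) 0)" and i2: "integrable (P k) (\<lambda>y. max (mu - y) 0)"
    using Pk_int1 Pk_intc by (auto intro!: integrable_max integrable_diff)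
  have "(\<integral>y. max (y - mu) 0 \<partial>P k) - (\<integral>y. max (mu - y) 0 \<partial>P k) = (\<integral>y. max (y - mu) 0 - max (mu - y) 0 \<partial>P k)"
    using i1 i2 by simp
  also have "\<dots> = (\<integral>y. y - mu \<partial>P k)"
    by (intro Bochner_Integration.integral_cong) (auto simp: max_def)
  also have "\<dots> = 0"
    using Pk_int1 Pk_intc by (simp add: mean_def Pk.prob_space)
  finally have eq: "(\<integral>y. max (y - mu) 0 \<partial>P k) = (\<integral>y. max (mu - y) 0 \<partial>P k)" by simp
  show "(\<integral>\<^sup>+y. ennreal (max (y - mu) 0) \<partial>P k) = (\<integral>\<^sup>+y. ennreal (max (mu - y) 0) \<partial>P k)"
    using i1 i2 eq by (subst (1 2) nn_integral_eq_integral) auto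
  show "(\<integral>\<^sup>+y. ennreal (max (y - mu) 0) \<partial>P k) < \<infinity>"
    using i1 by (subst nn_integral_eq_integral) auto
qed

lemma ennreal_ind: "ennreal (indicator A x * r) = indicator A x * ennreal r"
  by (simp split: split_indicator)

lemma L2k:
  assumes [measurable]: "u \<in> borel_measurable trajM" and upos: "\<And>\<omega>. 0 \<le> u \<omega>"
    and udet: "\<And>\<omega> \<omega>'. prefix_eq t \<omega> \<omega>' \<Longrightarrow> u \<omega> = u \<omega>'"
    and [measurable]: "g \<in> borel_measurable borel" and gpos: "\<And>y. 0 \<le> g y"
  shows "(\<integral>\<^sup>+\<omega>. ennreal (indicator {\<omega>. Aof \<omega> t = k} \<omega> * u \<omega> * g (Yof \<omega> t)) \<partial>Q) =
    (\<integral>\<^sup>+\<omega>. ennreal (u \<omega>) * indicator {\<omega>. Aof \<omega> t = k} \<omega> \<partial>Q) * (\<integral>\<^sup>+y. ennreal (g y) \<partial>P k)"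
proof -
  have "(\<integral>\<^sup>+\<omega>. ennreal (indicator {\<omega>. Aof \<omega> t = k} \<omega> * u \<omega> * g (Yof \<omega> t)) \<partial>Q) =
    (\<integral>\<^sup>+\<omega>. ennreal (u \<omega>) * indicator {\<omega>. Aof \<omega> t = k} \<omega> * ennreal (g (Yof \<omega> t)) \<partial>Q)"
    using upos gpos by (intro nn_integral_cong) (simp add: ennreal_mult split: split_indicator)
  also have "\<dots> = (\<integral>\<^sup>+\<omega>. ennreal (u \<omega>) * indicator {\<omega>. Aof \<omega> t = k} \<omega> \<partial>Q) * (\<integral>\<^sup>+y. ennreal (g y) \<partial>P k)"
    by (rule L2) (use udet k sPk in auto)
  finally show ?thesis .
qed

lemma max_split: "(x::real) * y = max x 0 * max y 0 + max (-x) 0 * max (-y) 0 - max x 0 * max (-y) 0 - max (-x) 0 * max y 0"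
  by (cases "x \<ge> 0"; cases "y \<ge> 0") (auto simp: max_def)

lemma ennreal_cancel_right: "(a::ennreal) + c = b + c \<Longrightarrow> c \<noteq> \<infinity> \<Longrightarrow> a = b"
  by (metis add.commute ennreal_add_left_cancel)

lemma step_alg:
  fixes c s y sp sm ap am :: real
  assumes "s * y = sp * ap + sm * am - sp * am - sm * ap"
  shows "c * (s + y)\<^sup>2 + 2 * (1 * (c * sp) * am + 1 * (c * sm) * ap) = c * s\<^sup>2 + 1 * c * y\<^sup>2 + 2 * (1 * (c * sp) * ap + 1 * (c * sm) * am)"
proof -
  have "c * (s + y)\<^sup>2 = c * s\<^sup>2 + c * y\<^sup>2 + 2 * c * (s * y)" by (simp add: power2_eq_square algebra_simps)
  also have "\<dots> = c * s\<^sup>2 + c * y\<^sup>2 + 2 * c * (sp * ap + sm * am - sp * am - sm * ap)" using assms by simp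
  finally show ?thesis by (simp add: algebra_simps)
qed

lemma claim:
  "Hdet t h \<Longrightarrow> (\<integral>\<^sup>+\<omega>. ennreal (h \<omega> * (Sc k mu t \<omega>)\<^sup>2) \<partial>Q) =
     ennreal (\<sigma>\<^sup>2) * (\<integral>\<^sup>+\<omega>. ennreal (h \<omega> * real (Ncount k t \<omega>)) \<partial>Q)"
proof (induction t arbitrary: h)
  case 0
  then show ?case by (simp add: Sc_def)
next
  case (Suc t h)
  define S where "S = Sc k mu t"
  define N where "N = (\<lambda>\<omega>. real (Ncount k t \<omega>))"
  define a where "a = (\<lambda>\<omega>. Yof \<omega> t - mu)"
  define hk where "hk = (\<lambda>\<omega>. h (setA t k \<omega>))"
  define ht where "ht = (\<lambda>\<omega>. \<Sum>j\<in>{1..K}. nu t (Wof \<omega>) (Aof \<omega>) j * h (setA t j \<omega>))"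
  define Ak where "Ak = {\<omega>. Aof \<omega> t = k}"
  have Hh: "Hdet (Suc t) h" by fact
  have Hhk: "Hdet t hk" unfolding hk_def by (rule Hdet_setA[OF Hh])
  have Hht: "Hdet t ht" unfolding ht_def by (rule Hdet_avg[OF Hh])
  have [measurable]: "h \<in> borel_measurable trajM" "hk \<in> borel_measurable trajM" "ht \<in> borel_measurable trajM"
    using Hh Hhk Hht unfolding Hdet_def by blast+
  have [measurable]: "S \<in> borel_measurable trajM" "N \<in> borel_measurable trajM" "a \<in> borel_measurable trajM"
    "Ak \<in> sets trajM"
    unfolding S_def N_def a_def Ak_def by measurable
  have hb: "\<And>\<omega>. 0 \<le> h \<omega> \<and> h \<omega> \<le> 1" using Hh unfolding Hdet_def by blast
  have hkb: "\<And>\<omega>. 0 \<le> hk \<omega> \<and> hk \<omega> \<le> 1" using Hhk unfolding Hdet_def by blast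
  have htb: "\<And>\<omega>. 0 \<le> ht \<omega> \<and> ht \<omega> \<le> 1" using Hht unfolding Hdet_def by blast
  have Npos: "\<And>\<omega>. 0 \<le> N \<omega>" unfolding N_def by simp
  have hk_eq: "\<And>\<omega>. \<omega> \<in> Ak \<Longrightarrow> h \<omega> = hk \<omega>"
    unfolding hk_def Ak_def by (metis mem_Collect_eq setA_self)
  have S_suc: "\<And>\<omega>. Sc k mu (Suc t) \<omega> = S \<omega> + indicator Ak \<omega> * a \<omega>"
    unfolding S_def a_def Ak_def by (simp add: Sc_Suc Zc_def split: split_indicator)
  have N_suc: "\<And>\<omega>. real (Ncount k (Suc t) \<omega>) = N \<omega> + indicator Ak \<omega>"
    unfolding N_def Ak_def by (simp add: Ncount_Suc split: split_indicator)
  have Sdet: "\<And>\<omega> \<omega>'. prefix_eq t \<omega> \<omega>' \<Longrightarrow> S \<omega> = S \<omega>'" unfolding S_def by (rule Sc_prefix)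
  have Ndet: "\<And>\<omega> \<omega>'. prefix_eq t \<omega> \<omega>' \<Longrightarrow> N \<omega> = N \<omega>'"
    unfolding N_def prefix_eq_def by (metis Ncount_prefix)
  have hkdet: "\<And>\<omega> \<omega>'. prefix_eq t \<omega> \<omega>' \<Longrightarrow> hk \<omega> = hk \<omega>'" by (rule Hdet_prefix[OF Hhk])

  have finS: "(\<integral>\<^sup>+\<omega>. ennreal ((S \<omega>)\<^sup>2) \<partial>Q) < \<infinity>"
  proof -
    have eq: "(\<integral>\<^sup>+\<omega>. ennreal ((S \<omega>)\<^sup>2) \<partial>Q) = ennreal (\<sigma>\<^sup>2) * (\<integral>\<^sup>+\<omega>. ennreal (N \<omega>) \<partial>Q)"
      using Suc.IH[OF Hdet_const[of 1]] unfolding S_def N_def by simp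
    have "(\<integral>\<^sup>+\<omega>. ennreal (N \<omega>) \<partial>Q) \<le> (\<integral>\<^sup>+\<omega>. ennreal (real t) \<partial>Q)"
      unfolding N_def by (intro nn_integral_mono) (simp add: Ncount_le)
    also have "\<dots> = ennreal (real t)" using Q.emeasure_space_1 by simp
    finally have le: "(\<integral>\<^sup>+\<omega>. ennreal (N \<omega>) \<partial>Q) \<le> ennreal (real t)" .
    have "(\<integral>\<^sup>+\<omega>. ennreal ((S \<omega>)\<^sup>2) \<partial>Q) \<le> ennreal (\<sigma>\<^sup>2) * ennreal (real t)"
      unfolding eq by (rule mult_left_mono[OF le]) simp
    also have "\<dots> = ennreal (\<sigma>\<^sup>2 * real t)" by (simp add: ennreal_mult)
    also have "\<dots> < \<infinity>" by simp
    finally show ?thesis .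
  qed

  have stepA: "(\<integral>\<^sup>+\<omega>. ennreal (h \<omega> * (S \<omega>)\<^sup>2) \<partial>Q) = ennreal (\<sigma>\<^sup>2) * (\<integral>\<^sup>+\<omega>. ennreal (h \<omega> * N \<omega>) \<partial>Q)"
  proof -
    have "(\<integral>\<^sup>+\<omega>. ennreal (h \<omega> * (S \<omega>)\<^sup>2) \<partial>Q) = (\<integral>\<^sup>+\<omega>. ennreal (ht \<omega> * (S \<omega>)\<^sup>2) \<partial>Q)"
      unfolding ht_def
      by (rule avg) (use hb Sdet Hh in \<open>auto simp: Hdet_def\<close>)
    also have "\<dots> = ennreal (\<sigma>\<^sup>2) * (\<integral>\<^sup>+\<omega>. ennreal (ht \<omega> * N \<omega>) \<partial>Q)"
      using Suc.IH[OF Hht] unfolding S_def N_def .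
    also have "(\<integral>\<^sup>+\<omega>. ennreal (ht \<omega> * N \<omega>) \<partial>Q) = (\<integral>\<^sup>+\<omega>. ennreal (h \<omega> * N \<omega>) \<partial>Q)"
      unfolding ht_def
      by (rule avg[symmetric]) (use hb Ndet Npos Hh in \<open>auto simp: Hdet_def\<close>)
    finally show ?thesis .
  qed

  define sp where "sp = (\<lambda>\<omega>. max (S \<omega>) 0)"
  define sm where "sm = (\<lambda>\<omega>. max (- S \<omega>) 0)"
  define ap where "ap = (\<lambda>y. max (y - mu) (0::real))"
  define am where "am = (\<lambda>y. max (mu - y) (0::real))"
  define F1 where "F1 = (\<lambda>\<omega>. indicator Ak \<omega> * (hk \<omega> * sp \<omega>) * ap (Yof \<omega> t) + indicator Ak \<omega> * (hk \<omega> * sm \<omega>) * am (Yof \<omega> t))"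
  define F2 where "F2 = (\<lambda>\<omega>. indicator Ak \<omega> * (hk \<omega> * sp \<omega>) * am (Yof \<omega> t) + indicator Ak \<omega> * (hk \<omega> * sm \<omega>) * ap (Yof \<omega> t))"
  have [measurable]: "sp \<in> borel_measurable trajM" "sm \<in> borel_measurable trajM"
    "ap \<in> borel_measurable borel" "am \<in> borel_measurable borel"
    unfolding sp_def sm_def ap_def am_def by measurable
  have [measurable]: "F1 \<in> borel_measurable trajM" "F2 \<in> borel_measurable trajM"
    unfolding F1_def F2_def by measurable
  have spos: "\<And>\<omega>. 0 \<le> sp \<omega>" "\<And>\<omega>. 0 \<le> sm \<omega>" "\<And>y. 0 \<le> ap y" "\<And>y. 0 \<le> am y"
    unfolding sp_def sm_def ap_def am_def by auto
  have F1pos: "\<And>\<omega>. 0 \<le> F1 \<omega>" and F2pos: "\<And>\<omega>. 0 \<le> F2 \<omega>"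
    unfolding F1_def F2_def using spos hkb by (auto intro!: add_nonneg_nonneg mult_nonneg_nonneg)

  have pw: "h \<omega> * (Sc k mu (Suc t) \<omega>)\<^sup>2 + 2 * F2 \<omega> = h \<omega> * (S \<omega>)\<^sup>2 + indicator Ak \<omega> * hk \<omega> * (a \<omega>)\<^sup>2 + 2 * F1 \<omega>" for \<omega>
  proof (cases "\<omega> \<in> Ak")
    case True
    have ms: "S \<omega> * a \<omega> = sp \<omega> * ap (Yof \<omega> t) + sm \<omega> * am (Yof \<omega> t) - sp \<omega> * am (Yof \<omega> t) - sm \<omega> * ap (Yof \<omega> t)"
      unfolding sp_def sm_def ap_def am_def a_def using max_split[of "S \<omega>" "Yof \<omega> t - mu"] by simp
    show ?thesis using True hk_eq[OF True] step_alg[OF ms, of "hk \<omega>"] unfolding S_suc F1_def F2_def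
      by simp
  next
    case False
    then show ?thesis unfolding S_suc F1_def F2_def by simp
  qed

  have int_eq: "(\<integral>\<^sup>+\<omega>. ennreal (h \<omega> * (Sc k mu (Suc t) \<omega>)\<^sup>2) \<partial>Q) + (\<integral>\<^sup>+\<omega>. ennreal (2 * F2 \<omega>) \<partial>Q) =
     ((\<integral>\<^sup>+\<omega>. ennreal (h \<omega> * (S \<omega>)\<^sup>2) \<partial>Q) + (\<integral>\<^sup>+\<omega>. ennreal (indicator Ak \<omega> * hk \<omega> * (a \<omega>)\<^sup>2) \<partial>Q)) + (\<integral>\<^sup>+\<omega>. ennreal (2 * F1 \<omega>) \<partial>Q)"
  proof -
    have "(\<integral>\<^sup>+\<omega>. ennreal (h \<omega> * (Sc k mu (Suc t) \<omega>)\<^sup>2) \<partial>Q) + (\<integral>\<^sup>+\<omega>. ennreal (2 * F2 \<omega>) \<partial>Q) =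
        (\<integral>\<^sup>+\<omega>. ennreal (h \<omega> * (Sc k mu (Suc t) \<omega>)\<^sup>2) + ennreal (2 * F2 \<omega>) \<partial>Q)"
      by (rule nn_integral_add[symmetric]) measurable
    also have "\<dots> = (\<integral>\<^sup>+\<omega>. (ennreal (h \<omega> * (S \<omega>)\<^sup>2) + ennreal (indicator Ak \<omega> * hk \<omega> * (a \<omega>)\<^sup>2)) + ennreal (2 * F1 \<omega>) \<partial>Q)"
    proof (rule nn_integral_cong)
      fix \<omega>
      have "ennreal (h \<omega> * (Sc k mu (Suc t) \<omega>)\<^sup>2) + ennreal (2 * F2 \<omega>) = ennreal (h \<omega> * (Sc k mu (Suc t) \<omega>)\<^sup>2 + 2 * F2 \<omega>)"
        using hb F2pos by (intro ennreal_plus[symmetric]) auto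
      also have "\<dots> = ennreal (h \<omega> * (S \<omega>)\<^sup>2 + indicator Ak \<omega> * hk \<omega> * (a \<omega>)\<^sup>2 + 2 * F1 \<omega>)" by (simp only: pw)
      also have "\<dots> = (ennreal (h \<omega> * (S \<omega>)\<^sup>2) + ennreal (indicator Ak \<omega> * hk \<omega> * (a \<omega>)\<^sup>2)) + ennreal (2 * F1 \<omega>)"
        using hb hkb F1pos by (simp add: ennreal_plus[symmetric] del: ennreal_plus)
      finally show "ennreal (h \<omega> * (Sc k mu (Suc t) \<omega>)\<^sup>2) + ennreal (2 * F2 \<omega>) = (ennreal (h \<omega> * (S \<omega>)\<^sup>2) + ennreal (indicator Ak \<omega> * hk \<omega> * (a \<omega>)\<^sup>2)) + ennreal (2 * F1 \<omega>)" .
    qed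
    also have "\<dots> = (\<integral>\<^sup>+\<omega>. ennreal (h \<omega> * (S \<omega>)\<^sup>2) + ennreal (indicator Ak \<omega> * hk \<omega> * (a \<omega>)\<^sup>2) \<partial>Q) + (\<integral>\<^sup>+\<omega>. ennreal (2 * F1 \<omega>) \<partial>Q)"
      by (rule nn_integral_add) measurable
    also have "(\<integral>\<^sup>+\<omega>. ennreal (h \<omega> * (S \<omega>)\<^sup>2) + ennreal (indicator Ak \<omega> * hk \<omega> * (a \<omega>)\<^sup>2) \<partial>Q) =
       (\<integral>\<^sup>+\<omega>. ennreal (h \<omega> * (S \<omega>)\<^sup>2) \<partial>Q) + (\<integral>\<^sup>+\<omega>. ennreal (indicator Ak \<omega> * hk \<omega> * (a \<omega>)\<^sup>2) \<partial>Q)"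
      by (rule nn_integral_add) measurable
    finally show ?thesis .
  qed

  define Xp where "Xp = (\<integral>\<^sup>+\<omega>. ennreal (hk \<omega> * sp \<omega>) * indicator Ak \<omega> \<partial>Q)"
  define Xm where "Xm = (\<integral>\<^sup>+\<omega>. ennreal (hk \<omega> * sm \<omega>) * indicator Ak \<omega> \<partial>Q)"
  define cp where "cp = (\<integral>\<^sup>+y. ennreal (ap y) \<partial>P k)"
  define cm where "cm = (\<integral>\<^sup>+y. ennreal (am y) \<partial>P k)"
  have hkspdet: "\<And>\<omega> \<omega>'. prefix_eq t \<omega> \<omega>' \<Longrightarrow> hk \<omega> * sp \<omega> = hk \<omega>' * sp \<omega>'"
    unfolding sp_def using hkdet Sdet by metis
  have hksmdet: "\<And>\<omega> \<omega>'. prefix_eq t \<omega> \<omega>' \<Longrightarrow> hk \<omega> * sm \<omega> = hk \<omega>' * sm \<omega>'"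
    unfolding sm_def using hkdet Sdet by metis
  have L2a: "(\<integral>\<^sup>+\<omega>. ennreal (indicator Ak \<omega> * (hk \<omega> * sp \<omega>) * ap (Yof \<omega> t)) \<partial>Q) = Xp * cp"
    unfolding Xp_def cp_def Ak_def by (rule L2k) (use hkb spos hkspdet in auto)
  have L2b: "(\<integral>\<^sup>+\<omega>. ennreal (indicator Ak \<omega> * (hk \<omega> * sm \<omega>) * am (Yof \<omega> t)) \<partial>Q) = Xm * cm"
    unfolding Xm_def cm_def Ak_def by (rule L2k) (use hkb spos hksmdet in auto)
  have L2c: "(\<integral>\<^sup>+\<omega>. ennreal (indicator Ak \<omega> * (hk \<omega> * sp \<omega>) * am (Yof \<omega> t)) \<partial>Q) = Xp * cm"
    unfolding Xp_def cm_def Ak_def by (rule L2k) (use hkb spos hkspdet in auto)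
  have L2d: "(\<integral>\<^sup>+\<omega>. ennreal (indicator Ak \<omega> * (hk \<omega> * sm \<omega>) * ap (Yof \<omega> t)) \<partial>Q) = Xm * cp"
    unfolding Xm_def cp_def Ak_def by (rule L2k) (use hkb spos hksmdet in auto)
  have iF1: "(\<integral>\<^sup>+\<omega>. ennreal (F1 \<omega>) \<partial>Q) = Xp * cp + Xm * cm"
  proof -
    have "(\<integral>\<^sup>+\<omega>. ennreal (F1 \<omega>) \<partial>Q) = (\<integral>\<^sup>+\<omega>. ennreal (indicator Ak \<omega> * (hk \<omega> * sp \<omega>) * ap (Yof \<omega> t)) + ennreal (indicator Ak \<omega> * (hk \<omega> * sm \<omega>) * am (Yof \<omega> t)) \<partial>Q)"
      unfolding F1_def using hkb spos by (intro nn_integral_cong ennreal_plus) auto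
    also have "\<dots> = (\<integral>\<^sup>+\<omega>. ennreal (indicator Ak \<omega> * (hk \<omega> * sp \<omega>) * ap (Yof \<omega> t)) \<partial>Q) + (\<integral>\<^sup>+\<omega>. ennreal (indicator Ak \<omega> * (hk \<omega> * sm \<omega>) * am (Yof \<omega> t)) \<partial>Q)"
      by (rule nn_integral_add) measurable
    finally show ?thesis using L2a L2b by simp
  qed
  have iF2: "(\<integral>\<^sup>+\<omega>. ennreal (F2 \<omega>) \<partial>Q) = Xp * cm + Xm * cp"
  proof -
    have "(\<integral>\<^sup>+\<omega>. ennreal (F2 \<omega>) \<partial>Q) = (\<integral>\<^sup>+\<omega>. ennreal (indicator Ak \<omega> * (hk \<omega> * sp \<omega>) * am (Yof \<omega> t)) + ennreal (indicator Ak \<omega> * (hk \<omega> * sm \<omega>) * ap (Yof \<omega> t)) \<partial>Q)"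
      unfolding F2_def using hkb spos by (intro nn_integral_cong ennreal_plus) auto
    also have "\<dots> = (\<integral>\<^sup>+\<omega>. ennreal (indicator Ak \<omega> * (hk \<omega> * sp \<omega>) * am (Yof \<omega> t)) \<partial>Q) + (\<integral>\<^sup>+\<omega>. ennreal (indicator Ak \<omega> * (hk \<omega> * sm \<omega>) * ap (Yof \<omega> t)) \<partial>Q)"
      by (rule nn_integral_add) measurable
    finally show ?thesis using L2c L2d by simp
  qed
  have cpm: "cp = cm" unfolding cp_def cm_def ap_def am_def by (rule Pk_pm)
  have cpfin: "cp < \<infinity>" unfolding cp_def ap_def by (rule Pk_pm_fin)
  have fin1: "(\<integral>\<^sup>+\<omega>. ennreal (1 + (S \<omega>)\<^sup>2) \<partial>Q) < \<infinity>"
  proof -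
    have "(\<integral>\<^sup>+\<omega>. ennreal (1 + (S \<omega>)\<^sup>2) \<partial>Q) = (\<integral>\<^sup>+\<omega>. 1 + ennreal ((S \<omega>)\<^sup>2) \<partial>Q)"
      by (intro nn_integral_cong) (subst ennreal_plus, auto)
    also have "\<dots> = (\<integral>\<^sup>+\<omega>. 1 \<partial>Q) + (\<integral>\<^sup>+\<omega>. ennreal ((S \<omega>)\<^sup>2) \<partial>Q)"
      by (rule nn_integral_add) measurable
    also have "\<dots> = 1 + (\<integral>\<^sup>+\<omega>. ennreal ((S \<omega>)\<^sup>2) \<partial>Q)" using Q.emeasure_space_1 by simp
    finally show ?thesis using finS by (simp add: ennreal_add_eq_top less_top)
  qed
  have sq_bound: "\<And>x::real. max x 0 \<le> 1 + x\<^sup>2" "\<And>x::real. max (-x) 0 \<le> 1 + x\<^sup>2"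
  proof -
    have aux: "y \<le> 1 + y\<^sup>2" for y :: real
    proof (cases "y \<le> 1")
      case True then show ?thesis by (smt (verit) zero_le_power2)
    next
      case False
      then have "y * 1 \<le> y * y" by (intro mult_left_mono) auto
      then show ?thesis by (simp add: power2_eq_square)
    qed
    fix x :: real
    show "max x 0 \<le> 1 + x\<^sup>2" using aux[of x] by (simp add: max_def)
    show "max (-x) 0 \<le> 1 + x\<^sup>2" using aux[of "-x"] by (simp add: max_def)
  qed
  have Xpfin: "Xp < \<infinity>"
  proof -
    have "Xp \<le> (\<integral>\<^sup>+\<omega>. ennreal (1 + (S \<omega>)\<^sup>2) \<partial>Q)"
      unfolding Xp_def
    proof (intro nn_integral_mono)
      fix \<omega>
      have "hk \<omega> * sp \<omega> \<le> 1 + (S \<omega>)\<^sup>2"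
        using hkb[of \<omega>] spos(1)[of \<omega>] sq_bound(1)[of "S \<omega>"] unfolding sp_def
        by (meson mult_left_le_one_le order_trans)
      then show "ennreal (hk \<omega> * sp \<omega>) * indicator Ak \<omega> \<le> ennreal (1 + (S \<omega>)\<^sup>2)"
        by (auto split: split_indicator intro!: ennreal_leI simp del: ennreal_plus)
    qed
    then show ?thesis using fin1 by (simp add: le_less_trans)
  qed
  have Xmfin: "Xm < \<infinity>"
  proof -
    have "Xm \<le> (\<integral>\<^sup>+\<omega>. ennreal (1 + (S \<omega>)\<^sup>2) \<partial>Q)"
      unfolding Xm_def
    proof (intro nn_integral_mono)
      fix \<omega>
      have "hk \<omega> * sm \<omega> \<le> 1 + (S \<omega>)\<^sup>2"
        using hkb[of \<omega>] spos(2)[of \<omega>] sq_bound(2)[of "S \<omega>"] unfolding sm_def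
        by (meson mult_left_le_one_le order_trans)
      then show "ennreal (hk \<omega> * sm \<omega>) * indicator Ak \<omega> \<le> ennreal (1 + (S \<omega>)\<^sup>2)"
        by (auto split: split_indicator intro!: ennreal_leI simp del: ennreal_plus)
    qed
    then show ?thesis using fin1 by (simp add: le_less_trans)
  qed
  have two: "\<And>F. F \<in> borel_measurable trajM \<Longrightarrow> (\<And>\<omega>. 0 \<le> F \<omega>) \<Longrightarrow> (\<integral>\<^sup>+\<omega>. ennreal (2 * F \<omega>) \<partial>Q) = 2 * (\<integral>\<^sup>+\<omega>. ennreal (F \<omega>) \<partial>Q)"
    by (subst nn_integral_cmult[symmetric]) (auto simp: ennreal_mult)
  have P1: "(\<integral>\<^sup>+\<omega>. ennreal (2 * F1 \<omega>) \<partial>Q) = 2 * (Xp * cm + Xm * cm)"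
    using two[of F1] F1pos iF1 cpm by simp
  have P2: "(\<integral>\<^sup>+\<omega>. ennreal (2 * F2 \<omega>) \<partial>Q) = 2 * (Xp * cm + Xm * cm)"
    using two[of F2] F2pos iF2 cpm by simp
  have Phi: "(\<integral>\<^sup>+\<omega>. ennreal (2 * F2 \<omega>) \<partial>Q) = (\<integral>\<^sup>+\<omega>. ennreal (2 * F1 \<omega>) \<partial>Q)"
    unfolding P1 P2 ..
  have cmfin: "cm < \<infinity>" using cpfin cpm by simp
  have "Xp * cm < \<infinity>" using Xpfin cmfin by (simp add: ennreal_mult_less_top)
  moreover have "Xm * cm < \<infinity>" using Xmfin cmfin by (simp add: ennreal_mult_less_top)
  ultimately have xfin: "Xp * cm + Xm * cm \<noteq> \<infinity>" unfolding ennreal_add_eq_top by auto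
  have twofin: "(2::ennreal) \<noteq> \<infinity>" by simp
  have Phifin: "(\<integral>\<^sup>+\<omega>. ennreal (2 * F1 \<omega>) \<partial>Q) \<noteq> \<infinity>"
    unfolding P1 by (metis ennreal_mult_eq_top_iff xfin twofin infinity_ennreal_def)
  have E: "(\<integral>\<^sup>+\<omega>. ennreal (indicator Ak \<omega> * hk \<omega> * (a \<omega>)\<^sup>2) \<partial>Q) =
      (\<integral>\<^sup>+\<omega>. ennreal (hk \<omega>) * indicator Ak \<omega> \<partial>Q) * ennreal (\<sigma>\<^sup>2)"
  proof -
    have "(\<integral>\<^sup>+\<omega>. ennreal (indicator Ak \<omega> * hk \<omega> * (a \<omega>)\<^sup>2) \<partial>Q) =
      (\<integral>\<^sup>+\<omega>. ennreal (hk \<omega>) * indicator Ak \<omega> \<partial>Q) * (\<integral>\<^sup>+y. ennreal ((y - mu)\<^sup>2) \<partial>P k)"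
      unfolding Ak_def a_def by (rule L2k) (use hkb hkdet in auto)
    then show ?thesis using Pk_nnsq by simp
  qed
  have L: "(\<integral>\<^sup>+\<omega>. ennreal (h \<omega> * (Sc k mu (Suc t) \<omega>)\<^sup>2) \<partial>Q) =
     (\<integral>\<^sup>+\<omega>. ennreal (h \<omega> * (S \<omega>)\<^sup>2) \<partial>Q) + (\<integral>\<^sup>+\<omega>. ennreal (indicator Ak \<omega> * hk \<omega> * (a \<omega>)\<^sup>2) \<partial>Q)"
    using ennreal_cancel_right[OF int_eq[unfolded Phi] Phifin] .
  have NN: "(\<integral>\<^sup>+\<omega>. ennreal (h \<omega> * real (Ncount k (Suc t) \<omega>)) \<partial>Q) =
     (\<integral>\<^sup>+\<omega>. ennreal (h \<omega> * N \<omega>) \<partial>Q) + (\<integral>\<^sup>+\<omega>. ennreal (hk \<omega>) * indicator Ak \<omega> \<partial>Q)"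
  proof -
    have "(\<integral>\<^sup>+\<omega>. ennreal (h \<omega> * real (Ncount k (Suc t) \<omega>)) \<partial>Q) = (\<integral>\<^sup>+\<omega>. ennreal (h \<omega> * N \<omega>) + ennreal (hk \<omega>) * indicator Ak \<omega> \<partial>Q)"
    proof (intro nn_integral_cong)
      fix \<omega>
      show "ennreal (h \<omega> * real (Ncount k (Suc t) \<omega>)) = ennreal (h \<omega> * N \<omega>) + ennreal (hk \<omega>) * indicator Ak \<omega>"
        using hb[of \<omega>] Npos[of \<omega>] hk_eq[of \<omega>] unfolding N_suc
        by (cases "\<omega> \<in> Ak") (simp_all add: distrib_left ennreal_plus[symmetric] del: ennreal_plus)
    qed
    also have "\<dots> = (\<integral>\<^sup>+\<omega>. ennreal (h \<omega> * N \<omega>) \<partial>Q) + (\<integral>\<^sup>+\<omega>. ennreal (hk \<omega>) * indicator Ak \<omega> \<partial>Q)"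
      by (rule nn_integral_add) measurable
    finally show ?thesis .
  qed
  show ?case
  proof -
    have "(\<integral>\<^sup>+\<omega>. ennreal (h \<omega> * (Sc k mu (Suc t) \<omega>)\<^sup>2) \<partial>Q) =
      ennreal (\<sigma>\<^sup>2) * (\<integral>\<^sup>+\<omega>. ennreal (h \<omega> * N \<omega>) \<partial>Q) + ennreal (\<sigma>\<^sup>2) * (\<integral>\<^sup>+\<omega>. ennreal (hk \<omega>) * indicator Ak \<omega> \<partial>Q)"
      unfolding L stepA E by (simp only: mult.commute)
    also have "\<dots> = ennreal (\<sigma>\<^sup>2) * (\<integral>\<^sup>+\<omega>. ennreal (h \<omega> * real (Ncount k (Suc t) \<omega>)) \<partial>Q)"
      unfolding NN by (simp only: distrib_left)
    finally show ?thesis .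
  qed
qed

lemma risk_sm:
  assumes T: "nonadaptive_stop T" and N1: "AE \<omega> in Q. 1 \<le> Ncount k (T \<omega>) \<omega>"
  shows "risk k mu (sample_mean k) Q T = ennreal (\<sigma>\<^sup>2)"
proof -
  have Tm[measurable]: "T \<in> measurable trajM (count_space UNIV)" using T by (simp add: nonadaptive_stop_def)
  have Tpre: "\<And>t \<omega> \<omega>'. prefix_eq t \<omega> \<omega>' \<Longrightarrow> (T \<omega> = t \<longleftrightarrow> T \<omega>' = t)"
    and TWA: "\<And>\<omega> \<omega>'. Wof \<omega> = Wof \<omega>' \<Longrightarrow> Aof \<omega> = Aof \<omega>' \<Longrightarrow> T \<omega> = T \<omega>'"
    using T unfolding nonadaptive_stop_def by blast+
  have Tset[measurable]: "\<And>t. {\<omega>. T \<omega> = t} \<in> sets trajM"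
  proof -
    fix t
    have "T -` {t} \<inter> space trajM \<in> sets trajM" by (rule measurable_sets[OF Tm]) simp
    moreover have "T -` {t} \<inter> space trajM = {\<omega>. T \<omega> = t}" by auto
    ultimately show "{\<omega>. T \<omega> = t} \<in> sets trajM" by simp
  qed
  define ht where "ht = (\<lambda>t \<omega>. indicator {\<omega>. T \<omega> = t} \<omega> * (1 / real (Ncount k t \<omega>)))"
  have [measurable]: "\<And>t. ht t \<in> borel_measurable trajM" unfolding ht_def by measurable
  have Hht: "Hdet t (ht t)" for t
    unfolding Hdet_def
  proof (intro conjI allI impI)
    show "ht t \<in> borel_measurable trajM" by measurable
  next
    fix \<omega> show "0 \<le> ht t \<omega>" unfolding ht_def by simp
    show "ht t \<omega> \<le> 1" unfolding ht_def
      by (cases "Ncount k t \<omega> = 0") (auto split: split_indicator simp: divide_le_eq_1)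
  next
    fix \<omega> \<omega>' assume a: "Wof \<omega> = Wof \<omega>' \<and> (\<forall>i<t. Aof \<omega> i = Aof \<omega>' i)"
    define \<omega>'' where "\<omega>'' = (Wof \<omega>, Aof \<omega>', Yof \<omega>)"
    have "prefix_eq t \<omega> \<omega>''" using a unfolding prefix_eq_def \<omega>''_def by (simp add: Wof_def Aof_def Yof_def)
    then have "T \<omega> = t \<longleftrightarrow> T \<omega>'' = t" by (rule Tpre)
    moreover have "T \<omega>'' = T \<omega>'" using a by (intro TWA) (simp_all add: \<omega>''_def Wof_def Aof_def Yof_def)
    moreover have "Ncount k t \<omega> = Ncount k t \<omega>'" using a by (intro Ncount_prefix) auto
    ultimately show "ht t \<omega> = ht t \<omega>'" unfolding ht_def by (simp split: split_indicator)
  qed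
  have pw: "ennreal (real (Ncount k (T \<omega>) \<omega>) * (sample_mean k (T \<omega>) \<omega> - mu)\<^sup>2) =
      (\<Sum>t. ennreal (ht t \<omega> * (Sc k mu t \<omega>)\<^sup>2))" for \<omega>
  proof -
    have "(\<Sum>t. ennreal (ht t \<omega> * (Sc k mu t \<omega>)\<^sup>2)) = (\<Sum>t\<in>{T \<omega>}. ennreal (ht t \<omega> * (Sc k mu t \<omega>)\<^sup>2))"
      by (rule suminf_finite) (auto simp: ht_def)
    also have "\<dots> = ennreal ((1 / real (Ncount k (T \<omega>) \<omega>)) * (Sc k mu (T \<omega>) \<omega>)\<^sup>2)"
      by (simp add: ht_def)
    also have "(1 / real (Ncount k (T \<omega>) \<omega>)) * (Sc k mu (T \<omega>) \<omega>)\<^sup>2 = real (Ncount k (T \<omega>) \<omega>) * (sample_mean k (T \<omega>) \<omega> - mu)\<^sup>2"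
      unfolding Sc_eq sample_mean_def
      by (cases "Ncount k (T \<omega>) \<omega> = 0") (simp_all add: field_simps power2_eq_square)
    finally show ?thesis by simp
  qed
  have "risk k mu (sample_mean k) Q T = (\<integral>\<^sup>+\<omega>. (\<Sum>t. ennreal (ht t \<omega> * (Sc k mu t \<omega>)\<^sup>2)) \<partial>Q)"
    unfolding risk_def by (simp only: pw)
  also have "\<dots> = (\<Sum>t. \<integral>\<^sup>+\<omega>. ennreal (ht t \<omega> * (Sc k mu t \<omega>)\<^sup>2) \<partial>Q)"
    by (rule nn_integral_suminf) measurable
  also have "\<dots> = (\<Sum>t. ennreal (\<sigma>\<^sup>2) * \<integral>\<^sup>+\<omega>. ennreal (ht t \<omega> * real (Ncount k t \<omega>)) \<partial>Q)"
    using claim[OF Hht] by simp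
  also have "\<dots> = ennreal (\<sigma>\<^sup>2) * (\<Sum>t. \<integral>\<^sup>+\<omega>. ennreal (ht t \<omega> * real (Ncount k t \<omega>)) \<partial>Q)"
    by (rule ennreal_suminf_cmult)
  also have "(\<Sum>t. \<integral>\<^sup>+\<omega>. ennreal (ht t \<omega> * real (Ncount k t \<omega>)) \<partial>Q) = (\<integral>\<^sup>+\<omega>. (\<Sum>t. ennreal (ht t \<omega> * real (Ncount k t \<omega>))) \<partial>Q)"
    by (rule nn_integral_suminf[symmetric]) measurable
  also have "\<dots> = (\<integral>\<^sup>+\<omega>. 1 \<partial>Q)"
  proof (rule nn_integral_cong_AE)
    show "AE \<omega> in Q. (\<Sum>t. ennreal (ht t \<omega> * real (Ncount k t \<omega>))) = 1"
      using N1
    proof eventually_elim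
      case (elim \<omega>)
      have "(\<Sum>t. ennreal (ht t \<omega> * real (Ncount k t \<omega>))) = (\<Sum>t\<in>{T \<omega>}. ennreal (ht t \<omega> * real (Ncount k t \<omega>)))"
        by (rule suminf_finite) (auto simp: ht_def)
      also have "\<dots> = 1" using elim by (simp add: ht_def)
      finally show ?case .
    qed
  qed
  also have "\<dots> = 1" using Q.emeasure_space_1 by simp
  finally show ?thesis by simp
qed

end




definition twopt :: "real \<Rightarrow> real \<Rightarrow> real measure" where
  "twopt \<sigma> c = distr (measure_pmf (bernoulli_pmf (1/2))) borel (\<lambda>b. if b then c + \<sigma> else c - \<sigma>)"

lemma twopt_meas[measurable]: "(\<lambda>b. if b then c + \<sigma> else c - (\<sigma>::real)) \<in> measurable (measure_pmf (bernoulli_pmf (1/2))) borel"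
  by simp

lemma sets_twopt[measurable_cong]: "sets (twopt \<sigma> c) = sets borel"
  unfolding twopt_def by simp

lemma prob_twopt: "prob_space (twopt \<sigma> c)"
  unfolding twopt_def by (rule measure_pmf.prob_space_distr) simp

lemma integrable_twopt: "f \<in> borel_measurable borel \<Longrightarrow> integrable (twopt \<sigma> c) (f :: real \<Rightarrow> real)"
  unfolding twopt_def by (subst integrable_distr_eq) (auto intro: integrable_measure_pmf_finite)

lemma integral_twopt: "f \<in> borel_measurable borel \<Longrightarrow> (\<integral>x. (f :: real \<Rightarrow> real) x \<partial>twopt \<sigma> c) = f (c + \<sigma>) / 2 + f (c - \<sigma>) / 2"
  unfolding twopt_def by (subst integral_distr) auto

lemma nn_integral_twopt: "f \<in> borel_measurable borel \<Longrightarrow> (\<integral>\<^sup>+x. f x \<partial>twopt \<sigma> c) = f (c + \<sigma>) * ennreal (1/2) + f (c - \<sigma>) * ennreal (1/2)"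
  unfolding twopt_def by (subst nn_integral_distr) auto

lemma mean_twopt: "mean (twopt \<sigma> c) = c"
  unfolding mean_def by (subst integral_twopt) (auto simp: field_simps)

lemma var_twopt: "var_class \<sigma> (twopt \<sigma> c)"
  unfolding var_class_def arm_dist_def
  by (auto simp: prob_twopt sets_twopt integrable_twopt mean_twopt integral_twopt)


lemma indep_prefix:
  fixes M :: "'a measure"
  assumes M: "prob_space M" and B: "B \<in> sets (PiM UNIV (\<lambda>_::nat. M))"
    and det: "\<And>y y'. (\<forall>i<t. y i = y' i) \<Longrightarrow> y \<in> B \<Longrightarrow> y' \<in> space (PiM UNIV (\<lambda>_::nat. M)) \<Longrightarrow> y' \<in> B"
    and C: "C \<in> sets M"
  shows "emeasure (PiM UNIV (\<lambda>_::nat. M)) (B \<inter> {y. y t \<in> C}) = emeasure (PiM UNIV (\<lambda>_::nat. M)) B * emeasure M C"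
proof -
  interpret M: prob_space M by (rule M)
  interpret sequence_space M by unfold_locales
  let ?g = "\<lambda>(\<omega>, \<omega>'). comb_seq t \<omega> \<omega>'"
  have Bsub: "B \<subseteq> space S" using sets.sets_into_space[OF B] .
  have e1: "B \<inter> {y. y t \<in> C} = B \<inter> ((\<lambda>y. y t) -` C \<inter> space S)" using Bsub by auto
  have meas1: "B \<inter> {y. y t \<in> C} \<in> sets S"
    unfolding e1 using B C by (intro sets.Int measurable_sets[OF measurable_component_singleton]) auto
  have C0: "{\<omega>' \<in> space S. \<omega>' 0 \<in> C} \<in> sets S"
    using measurable_sets[OF measurable_component_singleton[of 0 UNIV "\<lambda>_. M"] C]
    by (simp add: vimage_def Int_def conj_commute)
  have pre: "?g -` (B \<inter> {y. y t \<in> C}) \<inter> space (S \<Otimes>\<^sub>M S) = B \<times> {\<omega>' \<in> space S. \<omega>' 0 \<in> C}"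
  proof (intro set_eqI iffI)
    fix x assume x: "x \<in> ?g -` (B \<inter> {y. y t \<in> C}) \<inter> space (S \<Otimes>\<^sub>M S)"
    obtain \<omega> \<omega>' where xe: "x = (\<omega>, \<omega>')" by (cases x)
    have sp: "\<omega> \<in> space S" "\<omega>' \<in> space S" using x xe by (auto simp: space_pair_measure)
    have "comb_seq t \<omega> \<omega>' \<in> B" using x xe by auto
    moreover have "\<forall>i<t. comb_seq t \<omega> \<omega>' i = \<omega> i" by (simp add: comb_seq_less)
    ultimately have "\<omega> \<in> B" using det sp by blast
    moreover have "\<omega>' 0 \<in> C" using x xe by (auto simp: comb_seq_def)
    ultimately show "x \<in> B \<times> {\<omega>' \<in> space S. \<omega>' 0 \<in> C}" using xe sp by auto
  next
    fix x assume x: "x \<in> B \<times> {\<omega>' \<in> space S. \<omega>' 0 \<in> C}"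
    obtain \<omega> \<omega>' where xe: "x = (\<omega>, \<omega>')" by (cases x)
    have sp: "\<omega> \<in> space S" "\<omega>' \<in> space S" using x xe Bsub by auto
    have csp: "comb_seq t \<omega> \<omega>' \<in> space S"
      using sp by (auto simp: space_PiM comb_seq_def PiE_def Pi_def extensional_def)
    have wB: "\<omega> \<in> B" using x xe by simp
    have agree: "\<forall>i<t. \<omega> i = comb_seq t \<omega> \<omega>' i" by (simp add: comb_seq_less)
    have "comb_seq t \<omega> \<omega>' \<in> B" by (rule det[OF agree wB csp])
    moreover have "comb_seq t \<omega> \<omega>' t \<in> C" using x xe by (auto simp: comb_seq_def)
    ultimately show "x \<in> ?g -` (B \<inter> {y. y t \<in> C}) \<inter> space (S \<Otimes>\<^sub>M S)"
      using xe sp by (auto simp: space_pair_measure)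
  qed
  have "emeasure S (B \<inter> {y. y t \<in> C}) = emeasure (distr (S \<Otimes>\<^sub>M S) S ?g) (B \<inter> {y. y t \<in> C})"
    by (subst (1) PiM_comb_seq[symmetric, of t]) (simp add: case_prod_beta)
  also have "\<dots> = emeasure (S \<Otimes>\<^sub>M S) (?g -` (B \<inter> {y. y t \<in> C}) \<inter> space (S \<Otimes>\<^sub>M S))"
    by (rule emeasure_distr[OF _ meas1]) (simp add: case_prod_beta measurable_comb_seq)
  also have "\<dots> = emeasure S B * emeasure S {\<omega>' \<in> space S. \<omega>' 0 \<in> C}"
    unfolding pre by (rule P.emeasure_pair_measure_Times[OF B C0])
  also have "emeasure S {\<omega>' \<in> space S. \<omega>' 0 \<in> C} = emeasure M C"
    using emeasure_PiM_Collect_single[of 0 C] C by simp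
  finally show ?thesis .
qed


definition seqM :: "real \<Rightarrow> real \<Rightarrow> (nat \<Rightarrow> real) measure" where
  "seqM \<sigma> c = PiM UNIV (\<lambda>_::nat. twopt \<sigma> c)"

definition embk :: "nat \<Rightarrow> (nat \<Rightarrow> real) \<Rightarrow> traj" where
  "embk k y = (0, (\<lambda>_. k), y)"

definition Qc :: "nat \<Rightarrow> real \<Rightarrow> real \<Rightarrow> traj measure" where
  "Qc k \<sigma> c = distr (seqM \<sigma> c) trajM (embk k)"

definition nu0 :: "nat \<Rightarrow> nat \<Rightarrow> real \<Rightarrow> (nat \<Rightarrow> nat) \<Rightarrow> nat \<Rightarrow> real" where
  "nu0 k t w a j = (if j = k then 1 else 0)"

lemma sets_seqM: "sets (seqM \<sigma> c) = sets (PiM UNIV (\<lambda>_::nat. (borel :: real measure)))"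
  unfolding seqM_def by (intro sets_PiM_cong) (auto simp: sets_twopt)

lemma space_seqM[simp]: "space (seqM \<sigma> c) = UNIV"
  using sets_eq_imp_space_eq[OF sets_seqM] by (simp add: space_PiM)

lemma meas_embk[measurable]: "embk k \<in> measurable (seqM \<sigma> c) trajM"
proof -
  have "(\<lambda>y::nat \<Rightarrow> real. y) \<in> measurable (seqM \<sigma> c) (PiM UNIV (\<lambda>_::nat. (borel :: real measure)))"
    using measurable_ident_sets[OF sets_seqM] by simp
  then show ?thesis unfolding embk_def trajM_def
    by (intro measurable_Pair measurable_const) (auto simp: space_PiM)
qed

lemma prob_seqM: "prob_space (seqM \<sigma> c)"
  unfolding seqM_def by (rule prob_space_PiM) (rule prob_twopt)

lemma prob_Qc: "prob_space (Qc k \<sigma> c)"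
  unfolding Qc_def by (rule prob_space.prob_space_distr[OF prob_seqM meas_embk])

lemma sets_Qc: "sets (Qc k \<sigma> c) = sets trajM"
  unfolding Qc_def by simp

lemma embk_simps[simp]: "Wof (embk k y) = 0" "Aof (embk k y) = (\<lambda>_. k)" "Yof (embk k y) = y"
  by (simp_all add: embk_def Wof_def Aof_def Yof_def)

lemma emeasure_Qc: "X \<in> sets trajM \<Longrightarrow> emeasure (Qc k \<sigma> c) X = emeasure (seqM \<sigma> c) (embk k -` X)"
  unfolding Qc_def by (subst emeasure_distr) auto

lemma law_Qc:
  assumes k: "k \<in> {1..K}"
  shows "bandit_law K (P(k := twopt \<sigma> c)) (nu0 k) (Qc k \<sigma> c)"
  unfolding bandit_law_def
proof (intro conjI allI impI)
  show "prob_space (Qc k \<sigma> c)" by (rule prob_Qc)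
  show "sets (Qc k \<sigma> c) = sets trajM" by (rule sets_Qc)
next
  fix t B j assume B: "data_event t B"
  then have Bm[measurable]: "B \<in> sets trajM" by (simp add: data_event_def)
  have "(\<integral>\<^sup>+\<omega>\<in>B. ennreal (nu0 k t (Wof \<omega>) (Aof \<omega>) j) \<partial>Qc k \<sigma> c) =
      (\<integral>\<^sup>+y. ennreal (nu0 k t (Wof (embk k y)) (Aof (embk k y)) j) * indicator B (embk k y) \<partial>seqM \<sigma> c)"
    unfolding Qc_def by (subst nn_integral_distr) (auto simp: nu0_def)
  also have "\<dots> = (if j = k then emeasure (seqM \<sigma> c) (embk k -` B) else 0)"
  proof (cases "j = k")
    case True
    have "(\<integral>\<^sup>+y. ennreal (nu0 k t (Wof (embk k y)) (Aof (embk k y)) j) * indicator B (embk k y) \<partial>seqM \<sigma> c) =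
       (\<integral>\<^sup>+y. indicator (embk k -` B) y \<partial>seqM \<sigma> c)"
      using True by (intro nn_integral_cong) (simp add: nu0_def split: split_indicator)
    also have "\<dots> = emeasure (seqM \<sigma> c) (embk k -` B)"
      using measurable_sets[OF meas_embk Bm] by (intro nn_integral_indicator) simp
    finally show ?thesis using True by simp
  next
    case False then show ?thesis by (simp add: nu0_def)
  qed
  also have "\<dots> = emeasure (Qc k \<sigma> c) (B \<inter> {\<omega>. Aof \<omega> t = j})"
    by (subst emeasure_Qc) (auto intro!: arg_cong[where f="emeasure (seqM \<sigma> c)"])
  finally show "emeasure (Qc k \<sigma> c) (B \<inter> {\<omega>. Aof \<omega> t = j}) = (\<integral>\<^sup>+\<omega>\<in>B. ennreal (nu0 k t (Wof \<omega>) (Aof \<omega>) j) \<partial>Qc k \<sigma> c)" ..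
next
  fix t B j and C :: "real set" assume B: "data_event t B" and j: "j \<in> {1..K}" and C: "C \<in> sets borel"
  then have Bm[measurable]: "B \<in> sets trajM" by (simp add: data_event_def)
  have Cm[measurable]: "C \<in> sets borel" by (rule C)
  show "emeasure (Qc k \<sigma> c) (B \<inter> {\<omega>. Aof \<omega> t = j} \<inter> {\<omega>. Yof \<omega> t \<in> C}) =
        emeasure (Qc k \<sigma> c) (B \<inter> {\<omega>. Aof \<omega> t = j}) * emeasure ((P(k := twopt \<sigma> c)) j) C"
  proof (cases "j = k")
    case False
    then show ?thesis by (subst (1 2) emeasure_Qc) auto
  next
    case True
    let ?B' = "embk k -` B"
    have B'm: "?B' \<in> sets (PiM UNIV (\<lambda>_::nat. twopt \<sigma> c))"
    proof -
      have "?B' \<in> sets (seqM \<sigma> c)" using measurable_sets[OF meas_embk[of k \<sigma> c] Bm] by simp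
      then show ?thesis by (simp add: seqM_def)
    qed
    have det: "y' \<in> ?B'" if "\<forall>i<t. y i = y' i" "y \<in> ?B'" for y y'
    proof -
      have "prefix_eq t (embk k y) (embk k y')" using that(1) by (simp add: prefix_eq_def)
      moreover have "\<forall>\<omega> \<omega>'. prefix_eq t \<omega> \<omega>' \<longrightarrow> (\<omega> \<in> B \<longleftrightarrow> \<omega>' \<in> B)" using B unfolding data_event_def by blast
      ultimately show ?thesis using that(2) by blast
    qed
    have "emeasure (Qc k \<sigma> c) (B \<inter> {\<omega>. Aof \<omega> t = j} \<inter> {\<omega>. Yof \<omega> t \<in> C}) = emeasure (seqM \<sigma> c) (?B' \<inter> {y. y t \<in> C})"
      using True by (subst emeasure_Qc) (auto intro!: arg_cong[where f="emeasure (seqM \<sigma> c)"])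
    also have "\<dots> = emeasure (seqM \<sigma> c) ?B' * emeasure (twopt \<sigma> c) C"
      unfolding seqM_def by (rule indep_prefix[OF prob_twopt B'm]) (use det C in \<open>auto simp: sets_twopt\<close>)
    also have "emeasure (seqM \<sigma> c) ?B' = emeasure (Qc k \<sigma> c) (B \<inter> {\<omega>. Aof \<omega> t = j})"
      using True by (subst emeasure_Qc) (auto intro!: arg_cong[where f="emeasure (seqM \<sigma> c)"])
    finally show ?thesis using True by simp
  qed
qed


lemma alg_nu0: "k \<in> {1..K} \<Longrightarrow> nonadaptive_alg K (nu0 k)"
  unfolding nonadaptive_alg_def nu0_def by (auto simp: sum.delta')

lemma stop1: "nonadaptive_stop (\<lambda>_. 1)"
  unfolding nonadaptive_stop_def by simp

lemma Ncount_1: "Ncount k 1 \<omega> = (if Aof \<omega> 0 = k then 1 else 0)"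
  using Ncount_Suc[of k 0 \<omega>] by simp

lemma Ncount_1': "Ncount k (Suc 0) \<omega> = (if Aof \<omega> 0 = k then 1 else 0)"
  using Ncount_Suc[of k 0 \<omega>] by simp

lemma Aset_g: "{\<omega>. Aof \<omega> t = j} \<in> sets trajM"
proof -
  have "(\<lambda>\<omega>. Aof \<omega> t) -` {j} \<inter> space trajM \<in> sets trajM" by (rule measurable_sets[OF meas_A]) simp
  moreover have "(\<lambda>\<omega>. Aof \<omega> t) -` {j} \<inter> space trajM = {\<omega>. Aof \<omega> t = j}" by auto
  ultimately show ?thesis by simp
qed

lemma AE_Qc: "AE \<omega> in Qc k \<sigma> c. 1 \<le> Ncount k 1 \<omega>"
proof -
  have "AE \<omega> in Qc k \<sigma> c. Aof \<omega> 0 = k"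
    unfolding Qc_def by (subst AE_distr_iff) (auto intro: Aset_g)
  then show ?thesis by eventually_elim (simp add: Ncount_1 Ncount_1')
qed

lemma adm_twopt: "k \<in> {1..K} \<Longrightarrow> (twopt \<sigma> c, nu0 k, Qc k \<sigma> c, \<lambda>_. 1) \<in> admissible K k \<sigma> P"
  unfolding admissible_def using var_twopt alg_nu0 law_Qc stop1 AE_Qc by auto

lemma risk_twopt:
  assumes est: "is_estimator est"
  shows "risk k (mean (twopt \<sigma> c)) est (Qc k \<sigma> c) (\<lambda>_. 1) =
    ennreal ((est 1 (embk k (\<lambda>_. c + \<sigma>)) - c)\<^sup>2 / 2 + (est 1 (embk k (\<lambda>_. c - \<sigma>)) - c)\<^sup>2 / 2)"
proof -
  have [measurable]: "est 1 \<in> borel_measurable trajM" "est (Suc 0) \<in> borel_measurable trajM" using est by (simp_all add: is_estimator_def)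
  have pre: "\<And>\<omega> \<omega>'. prefix_eq 1 \<omega> \<omega>' \<Longrightarrow> est 1 \<omega> = est 1 \<omega>'" using est unfolding is_estimator_def by blast
  define e where "e = (\<lambda>x::real. est 1 (embk k (\<lambda>_. x)))"
  have embc[measurable]: "(\<lambda>x::real. embk k (\<lambda>_. x)) \<in> measurable borel trajM"
    unfolding embk_def trajM_def
    by (intro measurable_Pair measurable_const measurable_PiM_single') (auto simp: space_PiM)
  have [measurable]: "e \<in> borel_measurable borel" unfolding e_def by measurable
  have "risk k (mean (twopt \<sigma> c)) est (Qc k \<sigma> c) (\<lambda>_. 1) = (\<integral>\<^sup>+\<omega>. ennreal (real (Ncount k 1 \<omega>) * (est 1 \<omega> - c)\<^sup>2) \<partial>Qc k \<sigma> c)"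
    unfolding risk_def mean_twopt ..
  also have "\<dots> = (\<integral>\<^sup>+y. ennreal (real (Ncount k 1 (embk k y)) * (est 1 (embk k y) - c)\<^sup>2) \<partial>seqM \<sigma> c)"
    unfolding Qc_def by (subst nn_integral_distr) auto
  also have "\<dots> = (\<integral>\<^sup>+y. ennreal ((e (y 0) - c)\<^sup>2) \<partial>seqM \<sigma> c)"
  proof (intro nn_integral_cong)
    fix y :: "nat \<Rightarrow> real"
    have "est 1 (embk k y) = e (y 0)" unfolding e_def by (intro pre) (simp add: prefix_eq_def)
    then show "ennreal (real (Ncount k 1 (embk k y)) * (est 1 (embk k y) - c)\<^sup>2) = ennreal ((e (y 0) - c)\<^sup>2)"
      by (simp add: Ncount_1 Ncount_1')
  qed
  also have "\<dots> = (\<integral>\<^sup>+x. ennreal ((e x - c)\<^sup>2) \<partial>twopt \<sigma> c)"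
  proof -
    interpret tp: prob_space "twopt \<sigma> c" by (rule prob_twopt)
    interpret sq: product_prob_space "\<lambda>_::nat. twopt \<sigma> c" UNIV by unfold_locales
    have "distr (seqM \<sigma> c) (twopt \<sigma> c) (\<lambda>\<omega>. \<omega> 0) = twopt \<sigma> c"
      unfolding seqM_def by (rule sq.PiM_component) simp
    then have "(\<integral>\<^sup>+x. ennreal ((e x - c)\<^sup>2) \<partial>twopt \<sigma> c) = (\<integral>\<^sup>+x. ennreal ((e x - c)\<^sup>2) \<partial>distr (seqM \<sigma> c) (twopt \<sigma> c) (\<lambda>\<omega>. \<omega> 0))"
      by simp
    also have "\<dots> = (\<integral>\<^sup>+y. ennreal ((e (y 0) - c)\<^sup>2) \<partial>seqM \<sigma> c)"
      by (subst nn_integral_distr) (auto simp: seqM_def)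
    finally show ?thesis ..
  qed
  also have "\<dots> = ennreal ((e (c + \<sigma>) - c)\<^sup>2) * ennreal (1/2) + ennreal ((e (c - \<sigma>) - c)\<^sup>2) * ennreal (1/2)"
    by (subst nn_integral_twopt) auto
  also have "\<dots> = ennreal ((e (c + \<sigma>) - c)\<^sup>2 * (1/2)) + ennreal ((e (c - \<sigma>) - c)\<^sup>2 * (1/2))"
    by (simp only: ennreal_mult'[symmetric] zero_le_power2)
  also have "\<dots> = ennreal ((e (c + \<sigma>) - c)\<^sup>2 * (1/2) + (e (c - \<sigma>) - c)\<^sup>2 * (1/2))"
    by (rule ennreal_plus[symmetric]) auto
  also have "\<dots> = ennreal ((e (c + \<sigma>) - c)\<^sup>2 / 2 + (e (c - \<sigma>) - c)\<^sup>2 / 2)"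
    by simp
  finally show ?thesis unfolding e_def .
qed


lemma pair_bound: "2 * \<sigma>\<^sup>2 \<le> (v - a)\<^sup>2 + (v - a - 2 * \<sigma>)\<^sup>2" for v a \<sigma> :: real
proof -
  have "(v - a)\<^sup>2 + (v - a - 2 * \<sigma>)\<^sup>2 = 2 * (v - a - \<sigma>)\<^sup>2 + 2 * \<sigma>\<^sup>2"
    by (simp add: power2_eq_square algebra_simps)
  then show ?thesis by simp
qed

lemma sum_bound:
  fixes e :: "real \<Rightarrow> real" and \<sigma> :: real
  defines "cc \<equiv> (\<lambda>m::nat. 2 * real m * \<sigma>)"
  defines "r \<equiv> (\<lambda>c. (e (c + \<sigma>) - c)\<^sup>2 / 2 + (e (c - \<sigma>) - c)\<^sup>2 / 2)"
  shows "real n * \<sigma>\<^sup>2 + (e (cc (Suc n) + \<sigma>) - cc (Suc n))\<^sup>2 / 2 \<le> (\<Sum>m\<in>{1..Suc n}. r (cc m))"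
proof (induction n)
  case 0
  then show ?case by (simp add: r_def)
next
  case (Suc n)
  have eqc: "cc (Suc (Suc n)) - \<sigma> = cc (Suc n) + \<sigma>" "cc (Suc (Suc n)) = cc (Suc n) + 2 * \<sigma>"
    unfolding cc_def by (simp_all add: algebra_simps)
  have pb: "2 * \<sigma>\<^sup>2 \<le> (e (cc (Suc n) + \<sigma>) - cc (Suc n))\<^sup>2 + (e (cc (Suc n) + \<sigma>) - cc (Suc n) - 2 * \<sigma>)\<^sup>2"
    by (rule pair_bound)
  have "(\<Sum>m\<in>{1..Suc (Suc n)}. r (cc m)) = (\<Sum>m\<in>{1..Suc n}. r (cc m)) + r (cc (Suc (Suc n)))"
    by simp
  also have "r (cc (Suc (Suc n))) = (e (cc (Suc (Suc n)) + \<sigma>) - cc (Suc (Suc n)))\<^sup>2 / 2 +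
      (e (cc (Suc n) + \<sigma>) - cc (Suc n) - 2 * \<sigma>)\<^sup>2 / 2"
    unfolding r_def eqc(1) by (simp add: eqc(2) algebra_simps)
  finally have eq: "(\<Sum>m\<in>{1..Suc (Suc n)}. r (cc m)) = (\<Sum>m\<in>{1..Suc n}. r (cc m)) + ((e (cc (Suc (Suc n)) + \<sigma>) - cc (Suc (Suc n)))\<^sup>2 / 2 +
      (e (cc (Suc n) + \<sigma>) - cc (Suc n) - 2 * \<sigma>)\<^sup>2 / 2)" .
  have rs: "real (Suc n) * \<sigma>\<^sup>2 = real n * \<sigma>\<^sup>2 + \<sigma>\<^sup>2" by (simp add: algebra_simps)
  show ?case unfolding eq rs using Suc.IH pb by linarith
qed

lemma lower_sup:
  assumes est: "is_estimator est" and k: "k \<in> {1..K}"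
  shows "ennreal (\<sigma>\<^sup>2) \<le> (SUP (Pk, nu, Q, T) \<in> admissible K k \<sigma> P. risk k (mean Pk) est Q T)"
    (is "_ \<le> ?R")
proof -
  define e where "e = (\<lambda>x::real. est 1 (embk k (\<lambda>_. x)))"
  define r where "r = (\<lambda>c. (e (c + \<sigma>) - c)\<^sup>2 / 2 + (e (c - \<sigma>) - c)\<^sup>2 / 2)"
  define cc where "cc = (\<lambda>m::nat. 2 * real m * \<sigma>)"
  have rc: "ennreal (r c) \<le> ?R" for c
  proof -
    have "ennreal (r c) = (\<lambda>(Pk, nu, Q, T). risk k (mean Pk) est Q T) (twopt \<sigma> c, nu0 k, Qc k \<sigma> c, \<lambda>_. 1)"
      using risk_twopt[OF est, of k \<sigma> c] by (simp add: r_def e_def)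
    also have "\<dots> \<le> ?R" by (rule SUP_upper[OF adm_twopt[OF k]])
    finally show ?thesis .
  qed
  have rn: "ennreal (real n * \<sigma>\<^sup>2 / real (Suc n)) \<le> ?R" for n
  proof -
    let ?A = "{1..Suc n}"
    have fin: "finite ((\<lambda>m. r (cc m)) ` ?A)" "(\<lambda>m. r (cc m)) ` ?A \<noteq> {}" by auto
    define M where "M = Max ((\<lambda>m. r (cc m)) ` ?A)"
    have "M \<in> (\<lambda>m. r (cc m)) ` ?A" unfolding M_def by (rule Max_in[OF fin])
    then obtain m0 where "m0 \<in> ?A" and M: "M = r (cc m0)" by blast
    have "(\<Sum>m\<in>?A. r (cc m)) \<le> of_nat (card ?A) * M"
      by (rule sum_bounded_above) (use fin in \<open>auto simp: M_def\<close>)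
    moreover have "real n * \<sigma>\<^sup>2 \<le> (\<Sum>m\<in>?A. r (cc m))"
      using sum_bound[where n=n and e=e and \<sigma>=\<sigma>] unfolding r_def cc_def
      by (smt (verit, best) zero_le_power2 divide_nonneg_pos)
    ultimately have "real n * \<sigma>\<^sup>2 \<le> real (Suc n) * M" by simp
    then have "real n * \<sigma>\<^sup>2 / real (Suc n) \<le> M" by (simp add: field_simps)
    then have "ennreal (real n * \<sigma>\<^sup>2 / real (Suc n)) \<le> ennreal (r (cc m0))" using M by (simp add: ennreal_leI)
    also have "\<dots> \<le> ?R" by (rule rc)
    finally show ?thesis .
  qed
  show ?thesis
  proof (rule ennreal_le_epsilon)
    fix \<epsilon> :: real assume "0 < \<epsilon>"
    obtain n :: nat where n: "\<sigma>\<^sup>2 / \<epsilon> < real n" using reals_Archimedean2 by blast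
    have "\<sigma>\<^sup>2 < \<epsilon> * real (Suc n)" using n \<open>0 < \<epsilon>\<close> by (simp add: field_simps)
    then have small: "\<sigma>\<^sup>2 / real (Suc n) \<le> \<epsilon>" by (simp add: field_simps)
    have split: "\<sigma>\<^sup>2 = real n * \<sigma>\<^sup>2 / real (Suc n) + \<sigma>\<^sup>2 / real (Suc n)"
    proof -
      have "real n * \<sigma>\<^sup>2 / real (Suc n) + \<sigma>\<^sup>2 / real (Suc n) = (real n * \<sigma>\<^sup>2 + \<sigma>\<^sup>2) / real (Suc n)"
        by (rule add_divide_distrib[symmetric])
      also have "real n * \<sigma>\<^sup>2 + \<sigma>\<^sup>2 = real (Suc n) * \<sigma>\<^sup>2" by (simp add: algebra_simps)
      also have "real (Suc n) * \<sigma>\<^sup>2 / real (Suc n) = \<sigma>\<^sup>2" by (rule nonzero_mult_div_cancel_left) simp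
      finally show ?thesis by simp
    qed
    have "ennreal (\<sigma>\<^sup>2) \<le> ennreal (real n * \<sigma>\<^sup>2 / real (Suc n)) + ennreal \<epsilon>"
    proof -
      have "ennreal (\<sigma>\<^sup>2) \<le> ennreal (real n * \<sigma>\<^sup>2 / real (Suc n) + \<epsilon>)"
        using small by (intro ennreal_leI) (subst split, simp)
      also have "\<dots> = ennreal (real n * \<sigma>\<^sup>2 / real (Suc n)) + ennreal \<epsilon>"
        using \<open>0 < \<epsilon>\<close> by (intro ennreal_plus) auto
      finally show ?thesis .
    qed
    also have "\<dots> \<le> ?R + ennreal \<epsilon>" using rn[of n] by (rule add_right_mono)
    finally show "ennreal (\<sigma>\<^sup>2) \<le> ?R + ennreal \<epsilon>" .
  qed
qed


lemma est_sm: "is_estimator (sample_mean k)"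
  unfolding is_estimator_def
proof (intro conjI allI impI)
  fix t show "sample_mean k t \<in> borel_measurable trajM"
    unfolding sample_mean_def[abs_def] by measurable
next
  fix t \<omega> \<omega>' assume pe: "prefix_eq t \<omega> \<omega>'"
  then have "Ncount k t \<omega> = Ncount k t \<omega>'" by (intro Ncount_prefix) (simp add: prefix_eq_def)
  then show "sample_mean k t \<omega> = sample_mean k t \<omega>'"
    unfolding sample_mean_def using Ssum_prefix[OF pe] by simp
qed

theorem proposition2:
  fixes K k :: nat and \<sigma> :: real and P :: "nat \<Rightarrow> real measure"
  assumes "k \<in> {1..K}" and "\<sigma> > 0"
    and "\<forall>j\<in>{1..K} - {k}. arm_dist (P j)"
  shows "(INF est \<in> {est. is_estimator est}.
            SUP (Pk, nu, Q, T) \<in> admissible K k \<sigma> P. risk k (mean Pk) est Q T)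
           = ennreal (\<sigma>\<^sup>2) \<and>
         (\<forall>(Pk, nu, Q, T) \<in> admissible K k \<sigma> P.
           risk k (mean Pk) (sample_mean k) Q T = ennreal (\<sigma>\<^sup>2))"
proof -
  have k: "k \<in> {1..K}" by fact
  have adm: "risk k (mean Pk) (sample_mean k) Q T = ennreal (\<sigma>\<^sup>2)"
    if "(Pk, nu, Q, T) \<in> admissible K k \<sigma> P" for Pk nu Q T
  proof -
    have vc: "var_class \<sigma> Pk" and alg: "nonadaptive_alg K nu" and law: "bandit_law K (P(k := Pk)) nu Q"
      and st: "nonadaptive_stop T" and ae: "AE \<omega> in Q. 1 \<le> Ncount k (T \<omega>) \<omega>"
      using that unfolding admissible_def by auto
    interpret A: armk K "P(k := Pk)" nu Q k \<sigma>
      by unfold_locales (use law alg k vc in simp_all)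
    show ?thesis using A.risk_sm[OF st ae] by simp
  qed
  have part2: "\<forall>(Pk, nu, Q, T) \<in> admissible K k \<sigma> P. risk k (mean Pk) (sample_mean k) Q T = ennreal (\<sigma>\<^sup>2)"
    using adm by auto
  have le: "(INF est \<in> {est. is_estimator est}.
            SUP (Pk, nu, Q, T) \<in> admissible K k \<sigma> P. risk k (mean Pk) est Q T) \<le> ennreal (\<sigma>\<^sup>2)"
  proof -
    have "(INF est \<in> {est. is_estimator est}.
            SUP (Pk, nu, Q, T) \<in> admissible K k \<sigma> P. risk k (mean Pk) est Q T) \<le>
          (SUP (Pk, nu, Q, T) \<in> admissible K k \<sigma> P. risk k (mean Pk) (sample_mean k) Q T)"
      by (rule INF_lower) (simp add: est_sm)
    also have "\<dots> \<le> ennreal (\<sigma>\<^sup>2)"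
      by (rule SUP_least) (use adm in auto)
    finally show ?thesis .
  qed
  have ge: "ennreal (\<sigma>\<^sup>2) \<le> (INF est \<in> {est. is_estimator est}.
            SUP (Pk, nu, Q, T) \<in> admissible K k \<sigma> P. risk k (mean Pk) est Q T)"
    by (rule INF_greatest) (use lower_sup k in auto)
  show ?thesis using le ge part2 by (simp add: order_antisym)
qed


end
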